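(* Let $\ell = p_1^{d_1}\cdots p_r^{d_r}$ with distinct primes $p_i$ and $d_i \ge 1$, let $A = A_1\times\cdots\times A_r$ with $A_i$ elementary abelian of order $p_i^{d_i}$, so that $\mathrm{Aut}(A) = \mathrm{GL}(d_1,p_1)\times\cdots\times \mathrm{GL}(d_r,p_r)$, and let $U \leq \mathrm{Aut}(A)$. Put $\sigma_i(U) = U \cap \mathrm{GL}(d_i,p_i)$ and $O(U) = O_{p_1}(\sigma_1(U))\times\cdots\times O_{p_r}(\sigma_r(U))$. Then: (a) $O(U)$ is the largest normal subgroup of $U$ that centralizes a series through $A$; (b) $U$ is $F$-relevant if and only if $O(U) = \{1\}$.
   Context: $O_p(X)$ denotes the largest normal $p$-subgroup of a finite group $X$. A subgroup $N \le \mathrm{Aut}(A)$ centralizes a series through $A$ if there is an $N$-invariant series of subgroups $A = A_1' > A_2' > \cdots > A_{l+1}' = \{1\}$ such that $N$ induces the identity on every quotient $A_j'/A_{j+1}'$. A subgroup $U \le \mathrm{Aut}(A)$ is $F$-relevant if no non-trivial normal subgroup of $U$ centralizes a series through $A$. *)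

theory Defs
  imports "HOL-Algebra.Algebra"
begin

definition O_p :: "('a, 'b) monoid_scheme \<Rightarrow> nat \<Rightarrow> 'a set" where
  "O_p Gr p = (THE H. normal H Gr \<and> (\<exists>k. card H = p ^ k) \<and>
                 (\<forall>K. normal K Gr \<and> (\<exists>k. card K = p ^ k) \<longrightarrow> K \<subseteq> H))"

definition centralizes_series :: "('a, 'b) monoid_scheme \<Rightarrow> ('a \<Rightarrow> 'a) set \<Rightarrow> bool" where
  "centralizes_series A H \<longleftrightarrow>
     (\<exists>(l::nat) (S::nat \<Rightarrow> 'a set).
        S 0 = carrier A \<and> S l = {\<one>\<^bsub>A\<^esub>} \<and>
        (\<forall>j\<le>l. subgroup (S j) A) \<and>
        (\<forall>j<l. S (Suc j) \<subset> S j) \<and>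
        (\<forall>n\<in>H. \<forall>j\<le>l. n ` S j \<subseteq> S j) \<and>
        (\<forall>n\<in>H. \<forall>j<l. \<forall>x\<in>S j. n x \<otimes>\<^bsub>A\<^esub> inv\<^bsub>A\<^esub> x \<in> S (Suc j)))"

definition F_relevant :: "('a, 'b) monoid_scheme \<Rightarrow> ('a \<Rightarrow> 'a) set \<Rightarrow> bool" where
  "F_relevant A U \<longleftrightarrow>
     (\<forall>H. normal H ((AutoGroup A)\<lparr>carrier := U\<rparr>) \<and> centralizes_series A H
          \<longrightarrow> H = {\<one>\<^bsub>AutoGroup A\<^esub>})"

text \<open>The factor GL(d_i,p_i) of Aut(A) = GL(d_1,p_1) x ... x GL(d_r,p_r), where
  A is the internal direct product of the A_j (j < r): the automorphisms of A
  acting trivially on every A_j with j \<noteq> i.\<close>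
definition GL_factor :: "('a, 'b) monoid_scheme \<Rightarrow> (nat \<Rightarrow> 'a set) \<Rightarrow> nat \<Rightarrow> nat \<Rightarrow> ('a \<Rightarrow> 'a) set" where
  "GL_factor A Ai r i = {\<phi> \<in> auto A. \<forall>j<r. j \<noteq> i \<longrightarrow> (\<forall>x\<in>Ai j. \<phi> x = x)}"

definition sigma :: "('a, 'b) monoid_scheme \<Rightarrow> (nat \<Rightarrow> 'a set) \<Rightarrow> nat \<Rightarrow> ('a \<Rightarrow> 'a) set \<Rightarrow> nat \<Rightarrow> ('a \<Rightarrow> 'a) set" where
  "sigma A Ai r U i = U \<inter> GL_factor A Ai r i"

text \<open>O(U) = O_{p_1}(sigma_1 U) x ... x O_{p_r}(sigma_r U), as a subgroup of Aut(A)
  (the internal product of these commuting subgroups = the subgroup they generate).\<close>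
definition O_U :: "('a, 'b) monoid_scheme \<Rightarrow> (nat \<Rightarrow> 'a set) \<Rightarrow> (nat \<Rightarrow> nat) \<Rightarrow> nat \<Rightarrow> ('a \<Rightarrow> 'a) set \<Rightarrow> ('a \<Rightarrow> 'a) set" where
  "O_U A Ai p r U = generate (AutoGroup A)
      (\<Union>i<r. O_p ((AutoGroup A)\<lparr>carrier := sigma A Ai r U i\<rparr>) (p i))"

end

theory Submission
  imports Defs
begin


lemma ppow_dvd:
  assumes "Factorial_Ring.prime (p::nat)" "n dvd p ^ k"
  shows "\<exists>j. n = p ^ j"
  using assms divides_primepow_nat by blast

lemma pgroup_of_exp:
  assumes K: "group K" and fin: "finite (carrier K)" and pr: "Factorial_Ring.prime (p::nat)"
    and ex: "\<And>x. x \<in> carrier K \<Longrightarrow> \<exists>e. x [^]\<^bsub>K\<^esub> (p ^ e) = \<one>\<^bsub>K\<^esub>"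
  shows "\<exists>k. order K = p ^ k"
proof -
  interpret K: group K by (rule K)
  have o0: "order K \<noteq> 0" using fin K.one_closed unfolding order_def by (metis card_0_eq empty_iff)
  have nu: "\<not> is_unit p" using pr not_prime_unit by blast
  obtain m where om: "order K = p ^ multiplicity p (order K) * m" and nd: "\<not> p dvd m"
    using multiplicity_decompose'[OF o0 nu] by blast
  show ?thesis
  proof (cases "m = 1")
    case True then show ?thesis using om by auto
  next
    case False
    then obtain q where q: "Factorial_Ring.prime (q::nat)" "q dvd m" using prime_factor_nat by blast
    have qp: "q \<noteq> p" using q nd by auto
    have "q dvd p ^ multiplicity p (order K) * m" using q(2) by (rule dvd_mult)
    hence "q dvd order K" using om by simp
    then obtain m' where "order K = q ^ 1 * m'" by auto
    then obtain Q where Q: "subgroup Q K" "card Q = q ^ 1"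
      using sylow_thm[OF q(1) K _ fin] by blast
    have "card Q \<ge> 2" using Q q prime_ge_2_nat by auto
    have "\<not> Q \<subseteq> {\<one>\<^bsub>K\<^esub>}"
    proof
      assume "Q \<subseteq> {\<one>\<^bsub>K\<^esub>}"
      hence "card Q \<le> 1" using card_mono[of "{\<one>\<^bsub>K\<^esub>}" Q] by simp
      with \<open>card Q \<ge> 2\<close> show False by simp
    qed
    then obtain y where y: "y \<in> Q" "y \<noteq> \<one>\<^bsub>K\<^esub>" by blast
    have yK: "y \<in> carrier K" using Q(1) y(1) subgroup.subset by blast
    interpret QG: group "K\<lparr>carrier := Q\<rparr>" using Q(1) K.subgroup_imp_group by blast
    have "y [^]\<^bsub>K\<lparr>carrier := Q\<rparr>\<^esub> order (K\<lparr>carrier := Q\<rparr>) = \<one>\<^bsub>K\<lparr>carrier := Q\<rparr>\<^esub>"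
      using QG.pow_order_eq_1 y(1) by simp
    hence yq: "y [^]\<^bsub>K\<^esub> q = \<one>\<^bsub>K\<^esub>" using Q(2) K.nat_pow_consistent
      by (simp add: order_def)
    obtain e where ye: "y [^]\<^bsub>K\<^esub> (p ^ e) = \<one>\<^bsub>K\<^esub>" using ex yK by blast
    have d1: "K.ord y dvd q" using yq K.pow_eq_id yK by blast
    have d2: "K.ord y dvd p ^ e" using ye K.pow_eq_id yK by blast
    have "coprime q (p ^ e)" using q(1) pr qp
      by (simp add: primes_coprime)
    hence "K.ord y dvd 1" using d1 d2
      by (meson coprime_common_divisor)
    hence "y [^]\<^bsub>K\<^esub> (1::nat) = \<one>\<^bsub>K\<^esub>" using K.pow_eq_id yK by blast
    hence "y = \<one>\<^bsub>K\<^esub>" using yK by simp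
    thus ?thesis using y by blast
  qed
qed

lemma pgroup_prod:
  assumes Gr: "group Gr" and fin: "finite (carrier Gr)" and pr: "Factorial_Ring.prime (p::nat)"
    and H: "H \<lhd> Gr" and K: "K \<lhd> Gr" and cH: "card H = p ^ a" and cK: "card K = p ^ b"
  shows "\<exists>c. card (H <#>\<^bsub>Gr\<^esub> K) = p ^ c"
proof -
  interpret Gr: group Gr by (rule Gr)
  have si: "second_isomorphism_grp H Gr K"
    by (rule second_isomorphism_grp.intro[OF H second_isomorphism_grp_axioms.intro[OF normal_imp_subgroup[OF K]]])
  have iso: "Gr\<lparr>carrier := K\<rparr> Mod H \<inter> K \<cong> Gr\<lparr>carrier := H <#>\<^bsub>Gr\<^esub> K\<rparr> Mod H"
    using second_isomorphism_grp.normal_intersection_quotient_isom[OF si] by (rule is_isoI)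
  have sK: "subgroup K Gr" using K normal_imp_subgroup by blast
  have sH: "subgroup H Gr" using H normal_imp_subgroup by blast
  have sHK: "subgroup (H <#>\<^bsub>Gr\<^esub> K) Gr"
    using normal_imp_subgroup[OF Gr.normal_subgroup_set_mult_closed[OF H K]] .
  have HinHK: "H \<subseteq> H <#>\<^bsub>Gr\<^esub> K" using second_isomorphism_grp.H_contained_in_set_mult[OF si] .
  interpret GK: group "Gr\<lparr>carrier := K\<rparr>" using Gr.subgroup_imp_group[OF sK] .
  interpret GHK: group "Gr\<lparr>carrier := H <#>\<^bsub>Gr\<^esub> K\<rparr>" using Gr.subgroup_imp_group[OF sHK] .
  have s1: "subgroup (H \<inter> K) (Gr\<lparr>carrier := K\<rparr>)"
    by (rule Gr.subgroup_incl[OF Gr.subgroups_Inter_pair[OF sH sK] sK]) blast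
  have s2: "subgroup H (Gr\<lparr>carrier := H <#>\<^bsub>Gr\<^esub> K\<rparr>)"
    using Gr.subgroup_incl[OF sH sHK HinHK] .
  have l1: "card (rcosets\<^bsub>Gr\<lparr>carrier := K\<rparr>\<^esub> (H \<inter> K)) * card (H \<inter> K) = card K"
    using GK.lagrange[OF s1] by (simp add: order_def)
  have l2: "card (rcosets\<^bsub>Gr\<lparr>carrier := H <#>\<^bsub>Gr\<^esub> K\<rparr>\<^esub> H) * card H = card (H <#>\<^bsub>Gr\<^esub> K)"
    using GHK.lagrange[OF s2] by (simp add: order_def)
  have eq: "card (rcosets\<^bsub>Gr\<lparr>carrier := K\<rparr>\<^esub> (H \<inter> K)) = card (rcosets\<^bsub>Gr\<lparr>carrier := H <#>\<^bsub>Gr\<^esub> K\<rparr>\<^esub> H)"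
    using iso_same_card[OF iso] by (simp add: FactGroup_def)
  have "card (rcosets\<^bsub>Gr\<lparr>carrier := K\<rparr>\<^esub> (H \<inter> K)) dvd p ^ b" using l1 cK by (metis dvd_triv_left)
  then obtain j where "card (rcosets\<^bsub>Gr\<lparr>carrier := K\<rparr>\<^esub> (H \<inter> K)) = p ^ j" using ppow_dvd[OF pr] by blast
  hence "card (H <#>\<^bsub>Gr\<^esub> K) = p ^ (j + a)" using l2 eq cH by (simp add: power_add)
  thus ?thesis by blast
qed

lemma Op_exists:
  assumes Gr: "group Gr" and fin: "finite (carrier Gr)" and pr: "Factorial_Ring.prime (p::nat)"
  shows "\<exists>H. normal H Gr \<and> (\<exists>k. card H = p ^ k) \<and>
                 (\<forall>K. normal K Gr \<and> (\<exists>k. card K = p ^ k) \<longrightarrow> K \<subseteq> H)"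
proof -
  interpret Gr: group Gr by (rule Gr)
  let ?N = "{K. normal K Gr \<and> (\<exists>k. card K = p ^ k)}"
  have "?N \<subseteq> Pow (carrier Gr)"
  proof
    fix K assume "K \<in> ?N"
    hence "subgroup K Gr" using normal_imp_subgroup by blast
    thus "K \<in> Pow (carrier Gr)" using subgroup.subset by blast
  qed
  hence finN: "finite ?N" using fin by (simp add: finite_subset)
  have "card {\<one>\<^bsub>Gr\<^esub>} = p ^ 0" by simp
  hence "{\<one>\<^bsub>Gr\<^esub>} \<in> ?N" using Gr.one_is_normal by blast
  hence ne: "?N \<noteq> {}" by blast
  have "Max (card ` ?N) \<in> card ` ?N" using finN ne by simp
  then obtain H where H: "H \<in> ?N" and HM: "card H = Max (card ` ?N)" by (rule imageE) (rule that, assumption, simp)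
  have Hmax: "\<And>K. K \<in> ?N \<Longrightarrow> card K \<le> card H" using finN HM by simp
  have "\<forall>K. normal K Gr \<and> (\<exists>k. card K = p ^ k) \<longrightarrow> K \<subseteq> H"
  proof (intro allI impI)
    fix K assume K: "normal K Gr \<and> (\<exists>k. card K = p ^ k)"
    have HN: "normal H Gr" using H by auto
    obtain a where a: "card H = p ^ a" using H by auto
    obtain b where b: "card K = p ^ b" using K by auto
    have KN: "normal K Gr" using K by auto
    obtain c where c: "card (H <#>\<^bsub>Gr\<^esub> K) = p ^ c"
      using pgroup_prod[OF Gr fin pr HN KN a b] by blast
    have "normal (H <#>\<^bsub>Gr\<^esub> K) Gr" using Gr.normal_subgroup_set_mult_closed[OF HN KN] .
    hence HKN: "(H <#>\<^bsub>Gr\<^esub> K) \<in> ?N" using c by auto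
    have si: "second_isomorphism_grp H Gr K"
      by (rule second_isomorphism_grp.intro[OF HN second_isomorphism_grp_axioms.intro[OF normal_imp_subgroup[OF KN]]])
    have sub1: "H \<subseteq> H <#>\<^bsub>Gr\<^esub> K" using second_isomorphism_grp.H_contained_in_set_mult[OF si] .
    have sub2: "K \<subseteq> H <#>\<^bsub>Gr\<^esub> K" using second_isomorphism_grp.S_contained_in_set_mult[OF si] .
    have "subgroup (H <#>\<^bsub>Gr\<^esub> K) Gr" using normal_imp_subgroup[OF Gr.normal_subgroup_set_mult_closed[OF HN KN]] .
    hence finHK: "finite (H <#>\<^bsub>Gr\<^esub> K)"
      using subgroup.subset fin finite_subset by blast
    have "card (H <#>\<^bsub>Gr\<^esub> K) \<le> card H" using Hmax[OF HKN] .
    hence "H = H <#>\<^bsub>Gr\<^esub> K" using card_subset_eq[OF finHK sub1] card_mono[OF finHK sub1] by simp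
    thus "K \<subseteq> H" using sub2 by simp
  qed
  thus ?thesis using H by blast
qed

lemma Op_props:
  assumes Gr: "group Gr" and fin: "finite (carrier Gr)" and pr: "Factorial_Ring.prime (p::nat)"
  shows "normal (O_p Gr p) Gr" "\<exists>k. card (O_p Gr p) = p ^ k"
    "\<And>K. normal K Gr \<Longrightarrow> card K = p ^ k \<Longrightarrow> K \<subseteq> O_p Gr p"
proof -
  obtain H where H: "normal H Gr \<and> (\<exists>k. card H = p ^ k) \<and>
                 (\<forall>K. normal K Gr \<and> (\<exists>k. card K = p ^ k) \<longrightarrow> K \<subseteq> H)"
    using Op_exists[OF assms] by blast
  have "O_p Gr p = H" unfolding O_p_def
  proof (rule the_equality)
    show "normal H Gr \<and> (\<exists>k. card H = p ^ k) \<and>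
                 (\<forall>K. normal K Gr \<and> (\<exists>k. card K = p ^ k) \<longrightarrow> K \<subseteq> H)" using H .
  next
    fix H' assume H': "normal H' Gr \<and> (\<exists>k. card H' = p ^ k) \<and>
                 (\<forall>K. normal K Gr \<and> (\<exists>k. card K = p ^ k) \<longrightarrow> K \<subseteq> H')"
    have "H \<subseteq> H'" using H H' by blast
    moreover have "H' \<subseteq> H" using H H' by blast
    ultimately show "H' = H" by blast
  qed
  thus "normal (O_p Gr p) Gr" "\<exists>k. card (O_p Gr p) = p ^ k"
    "\<And>K. normal K Gr \<Longrightarrow> card K = p ^ k \<Longrightarrow> K \<subseteq> O_p Gr p" using H by blast+
qed



lemma hom_finprod_comm:
  assumes A: "comm_group A" and hom: "\<phi> \<in> hom A A" and fin: "finite I" and f: "f \<in> I \<rightarrow> carrier A"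
  shows "\<phi> (finprod A f I) = finprod A (\<lambda>i. \<phi> (f i)) I"
  using fin f
proof (induction I rule: finite_induct)
  case empty
  interpret A: comm_group A by (rule A)
  interpret h: group_hom A A \<phi> by (unfold_locales) (rule hom)
  show ?case by simp
next
  case (insert a F)
  interpret A: comm_group A by (rule A)
  interpret h: group_hom A A \<phi> by (unfold_locales) (rule hom)
  have fa: "f a \<in> carrier A" "f \<in> F \<rightarrow> carrier A" using insert.prems by auto
  have pf: "(\<lambda>i. \<phi> (f i)) \<in> F \<rightarrow> carrier A" "\<phi> (f a) \<in> carrier A" using fa h.hom_closed by (auto simp: Pi_def)
  have "\<phi> (finprod A f (insert a F)) = \<phi> (f a \<otimes>\<^bsub>A\<^esub> finprod A f F)"
    using insert.hyps fa by simp
  also have "\<dots> = \<phi> (f a) \<otimes>\<^bsub>A\<^esub> \<phi> (finprod A f F)" using fa by simp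
  also have "\<dots> = \<phi> (f a) \<otimes>\<^bsub>A\<^esub> finprod A (\<lambda>i. \<phi> (f i)) F" using insert.IH fa by simp
  also have "\<dots> = finprod A (\<lambda>i. \<phi> (f i)) (insert a F)" using insert.hyps pf by simp
  finally show ?case .
qed

lemma pow_hom_comm:
  assumes A: "comm_group A"
  shows "(\<lambda>x. x [^]\<^bsub>A\<^esub> (n::nat)) \<in> hom A A"
proof -
  interpret A: comm_group A by (rule A)
  show ?thesis by (rule homI) (auto simp: A.nat_pow_distrib)
qed

lemma inv_hom_comm:
  assumes A: "comm_group A"
  shows "(\<lambda>x. inv\<^bsub>A\<^esub> x) \<in> hom A A"
proof -
  interpret A: comm_group A by (rule A)
  show ?thesis by (rule homI) (auto simp: A.inv_mult)
qed

definition wseries :: "('a, 'b) monoid_scheme \<Rightarrow> ('a \<Rightarrow> 'a) set \<Rightarrow> nat \<Rightarrow> (nat \<Rightarrow> 'a set) \<Rightarrow> bool" where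
  "wseries A H l S \<longleftrightarrow>
        S 0 = carrier A \<and> S l = {\<one>\<^bsub>A\<^esub>} \<and>
        (\<forall>j\<le>l. subgroup (S j) A) \<and>
        (\<forall>j<l. S (Suc j) \<subseteq> S j) \<and>
        (\<forall>n\<in>H. \<forall>j\<le>l. n ` S j \<subseteq> S j) \<and>
        (\<forall>n\<in>H. \<forall>j<l. \<forall>x\<in>S j. n x \<otimes>\<^bsub>A\<^esub> inv\<^bsub>A\<^esub> x \<in> S (Suc j))"

lemma wseries_centralizes:
  assumes "wseries A H l S"
  shows "centralizes_series A H"
  using assms
proof (induction l arbitrary: S rule: less_induct)
  case (less l)
  note W = less.prems[unfolded wseries_def]
  show ?case
  proof (cases "\<forall>j<l. S (Suc j) \<subset> S j")
    case True
    have W': "S 0 = carrier A \<and> S l = {\<one>\<^bsub>A\<^esub>} \<and>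
        (\<forall>j\<le>l. subgroup (S j) A) \<and>
        (\<forall>j<l. S (Suc j) \<subset> S j) \<and>
        (\<forall>n\<in>H. \<forall>j\<le>l. n ` S j \<subseteq> S j) \<and>
        (\<forall>n\<in>H. \<forall>j<l. \<forall>x\<in>S j. n x \<otimes>\<^bsub>A\<^esub> inv\<^bsub>A\<^esub> x \<in> S (Suc j))"
      using W True by (elim conjE) (intro conjI; assumption)
    show ?thesis unfolding centralizes_series_def by (rule exI[of _ l], rule exI[of _ S], rule W')
  next
    case False
    then obtain j where j0: "j < l" "\<not> S (Suc j) \<subset> S j" by blast
    have "S (Suc j) \<subseteq> S j" using W j0(1) by blast
    hence j: "j < l" "S (Suc j) = S j" using j0 by auto
    define S' where "S' = (\<lambda>k. if k \<le> j then S k else S (Suc k))"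
    have l1: "l - 1 < l" using j by simp
    have "wseries A H (l - 1) S'"
      unfolding wseries_def
    proof (intro conjI allI impI ballI)
      show "S' 0 = carrier A" using W by (simp add: S'_def)
      show "S' (l - 1) = {\<one>\<^bsub>A\<^esub>}"
      proof (cases "l - 1 \<le> j")
        case True
        hence "j = l - 1" using j by simp
        hence "Suc j = l" using j by simp
        thus ?thesis using j W \<open>j = l - 1\<close> by (simp add: S'_def)
      next
        case False thus ?thesis using j W by (simp add: S'_def)
      qed
      fix k
      show "k \<le> l - 1 \<Longrightarrow> subgroup (S' k) A" using W by (simp add: S'_def)
      show "k < l - 1 \<Longrightarrow> S' (Suc k) \<subseteq> S' k"
      proof -
        assume k: "k < l - 1"
        have dec: "\<And>i. i < l \<Longrightarrow> S (Suc i) \<subseteq> S i" using W by blast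
        show ?thesis
        proof (cases "Suc k \<le> j")
          case True thus ?thesis using dec[of k] k by (simp add: S'_def)
        next
          case False
          show ?thesis
          proof (cases "k = j")
            case True thus ?thesis using dec[of "Suc j"] k j by (simp add: S'_def)
          next
            case False
            thus ?thesis using dec[of "Suc k"] k \<open>\<not> Suc k \<le> j\<close> by (simp add: S'_def)
          qed
        qed
      qed
      fix n assume n: "n \<in> H"
      show "k \<le> l - 1 \<Longrightarrow> n ` S' k \<subseteq> S' k" using W n by (simp add: S'_def)
      fix x
      assume k: "k < l - 1" and x: "x \<in> S' k"
      show "n x \<otimes>\<^bsub>A\<^esub> inv\<^bsub>A\<^esub> x \<in> S' (Suc k)"
      proof (cases "k < j")
        case True thus ?thesis using W n x k j by (simp add: S'_def)
      next
        case False
        hence "x \<in> S (Suc k)" using x j by (simp add: S'_def) (metis le_antisym)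
        hence "n x \<otimes>\<^bsub>A\<^esub> inv\<^bsub>A\<^esub> x \<in> S (Suc (Suc k))" using W n k by simp
        thus ?thesis using False by (simp add: S'_def)
      qed
    qed
    thus ?thesis using less.IH[OF l1] by blast
  qed
qed

lemma (in group_action) fixed_mod:
  assumes fin: "finite (carrier G)" "finite E" and oG: "order G = p ^ n" and pr: "Factorial_Ring.prime (p::nat)"
  shows "card E mod p = card {x\<in>E. \<forall>g\<in>carrier G. \<phi> g x = x} mod p"
proof -
  let ?F = "{x\<in>E. \<forall>g\<in>carrier G. \<phi> g x = x}"
  let ?Os = "orbits G E \<phi>"
  have cE: "card E = (\<Sum>Q\<in>?Os. card Q)"
    using disjoint_sum[OF fin(2), of "\<lambda>_. (1::nat)"] by simp
  have finO: "finite ?Os" using fin(2) unfolding orbits_def by simp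
  have orbE: "\<And>x. x \<in> E \<Longrightarrow> orbit G \<phi> x \<subseteq> E"
    unfolding orbit_def using element_image by blast
  have m: "card Q mod p = (if card Q = 1 then 1 else 0) mod p" if Q: "Q \<in> ?Os" for Q
  proof -
    obtain x where x: "x \<in> E" "Q = orbit G \<phi> x" using Q unfolding orbits_def by blast
    have "card Q * card (stabilizer G \<phi> x) = p ^ n" using orbit_stabilizer_theorem[OF x(1)] x oG by simp
    hence "card Q dvd p ^ n" by (metis dvd_triv_left)
    then obtain i where i: "card Q = p ^ i" using ppow_dvd[OF pr] by blast
    show ?thesis
    proof (cases i)
      case 0 thus ?thesis using i by simp
    next
      case (Suc i') 
      hence "p dvd card Q" using i by simp
      moreover have "card Q \<noteq> 1" using i Suc pr
        by (metis One_nat_def nat_power_eq_Suc_0_iff not_prime_1 old.nat.distinct(1))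
      ultimately show ?thesis by simp
    qed
  qed
  have "card E mod p = (\<Sum>Q\<in>?Os. card Q mod p) mod p" using cE by (simp add: mod_sum_eq)
  also have "\<dots> = (\<Sum>Q\<in>?Os. (if card Q = 1 then 1 else 0) mod p) mod p"
    using m by (metis (no_types, lifting) sum.cong)
  also have "\<dots> = (\<Sum>Q\<in>?Os. (if card Q = 1 then 1 else 0)) mod p" by (simp add: mod_sum_eq)
  also have "(\<Sum>Q\<in>?Os. (if card Q = 1 then 1 else (0::nat))) = card {Q\<in>?Os. card Q = 1}"
    using finO by (simp add: sum.If_cases Int_def)
  also have "{Q\<in>?Os. card Q = 1} = (\<lambda>x. {x}) ` ?F"
  proof (intro equalityI subsetI)
    fix Q assume Q: "Q \<in> {Q\<in>?Os. card Q = 1}"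
    then obtain x where x: "x \<in> E" "Q = orbit G \<phi> x" unfolding orbits_def by blast
    have "x \<in> Q" using orbit_refl x by simp
    moreover have "card Q = 1" using Q by blast
    ultimately have Ox: "Q = {x}" by (metis card_1_singletonE singletonD)
    have "\<forall>g\<in>carrier G. \<phi> g x = x"
    proof
      fix g assume "g \<in> carrier G"
      hence "\<phi> g x \<in> Q" using x unfolding orbit_def by blast
      thus "\<phi> g x = x" using Ox by simp
    qed
    thus "Q \<in> (\<lambda>x. {x}) ` ?F" using x Ox by blast
  next
    fix Q assume "Q \<in> (\<lambda>x. {x}) ` ?F"
    then obtain x where x: "x \<in> ?F" "Q = {x}" by blast
    have "orbit G \<phi> x = {x}" using x orbit_refl unfolding orbit_def by auto
    thus "Q \<in> {Q\<in>?Os. card Q = 1}" using x unfolding orbits_def by auto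
  qed
  also have "card ((\<lambda>x. {x}) ` ?F) = card ?F" by (rule card_image) (simp add: inj_on_def)
  finally show ?thesis .
qed



lemma subgroup_nat_pow_closed:
  assumes "group A" "subgroup H A" "x \<in> H"
  shows "x [^]\<^bsub>A\<^esub> (n::nat) \<in> H"
proof (induction n)
  case 0 thus ?case using assms subgroup.one_closed by simp
next
  case (Suc n)
  interpret A: group A by fact
  have "x \<in> carrier A" using assms subgroup.subset by blast
  thus ?case using Suc assms(2,3) subgroup.m_closed by (simp add: A.nat_pow_Suc)
qed

lemma coprime_pow_one:
  assumes "group A" "x \<in> carrier A" "x [^]\<^bsub>A\<^esub> (a::nat) = \<one>\<^bsub>A\<^esub>" "x [^]\<^bsub>A\<^esub> (b::nat) = \<one>\<^bsub>A\<^esub>" "coprime a b"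
  shows "x = \<one>\<^bsub>A\<^esub>"
proof -
  interpret A: group A by fact
  have "A.ord x dvd a" "A.ord x dvd b" using assms A.pow_eq_id by blast+
  hence "A.ord x dvd 1" using assms(5) by (meson coprime_common_divisor)
  hence "x [^]\<^bsub>A\<^esub> (1::nat) = \<one>\<^bsub>A\<^esub>" using A.pow_eq_id assms(2) by blast
  thus ?thesis using assms(2) by simp
qed

locale dec =
  fixes A :: "('a, 'b) monoid_scheme"
    and Ai :: "nat \<Rightarrow> 'a set"
    and p d :: "nat \<Rightarrow> nat"
    and r :: nat
  assumes A_comm: "comm_group A"
    and primes: "\<forall>i<r. Factorial_Ring.prime (p i)"
    and distinct: "inj_on p {..<r}"
    and d_pos: "\<forall>i<r. d i \<ge> 1"
    and Ai_sub: "\<forall>i<r. subgroup (Ai i) A"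
    and Ai_card: "\<forall>i<r. card (Ai i) = p i ^ d i"
    and Ai_elem: "\<forall>i<r. \<forall>x\<in>Ai i. x [^]\<^bsub>A\<^esub> p i = \<one>\<^bsub>A\<^esub>"
    and dirprod: "bij_betw (\<lambda>x. finprod A x {..<r}) (\<Pi>\<^sub>E i\<in>{..<r}. Ai i) (carrier A)"
begin

abbreviation "G \<equiv> AutoGroup A"

lemma A_group: "group A" using A_comm comm_group.axioms(2) by blast

lemma Ai_carrier: "i < r \<Longrightarrow> Ai i \<subseteq> carrier A"
  using Ai_sub subgroup.subset by blast

lemma Ai_fin: "i < r \<Longrightarrow> finite (Ai i)"
proof -
  assume i: "i < r"
  have "p i ^ d i > 0" using primes i prime_gt_0_nat by simp
  thus ?thesis using Ai_card i card_ge_0_finite by metis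
qed

lemma PiE_fun: "f \<in> (\<Pi>\<^sub>E i\<in>{..<r}. Ai i) \<Longrightarrow> f \<in> {..<r} \<rightarrow> carrier A"
  using Ai_carrier by (auto simp: PiE_def Pi_def)

lemma surj_dec: "x \<in> carrier A \<Longrightarrow> \<exists>f\<in>(\<Pi>\<^sub>E i\<in>{..<r}. Ai i). x = finprod A f {..<r}"
  using bij_betw_imp_surj_on[OF dirprod] by auto

lemma finA: "finite (carrier A)"
proof -
  have "finite (\<Pi>\<^sub>E i\<in>{..<r}. Ai i)" by (rule finite_PiE) (auto simp: Ai_fin)
  thus ?thesis using bij_betw_imp_surj_on[OF dirprod] by (metis finite_imageI)
qed

lemma Ai_char: "i < r \<Longrightarrow> x \<in> carrier A \<Longrightarrow> x [^]\<^bsub>A\<^esub> p i = \<one>\<^bsub>A\<^esub> \<Longrightarrow> x \<in> Ai i"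
proof -
  assume i: "i < r" and x: "x \<in> carrier A" and xp: "x [^]\<^bsub>A\<^esub> p i = \<one>\<^bsub>A\<^esub>"
  interpret A: comm_group A by (rule A_comm)
  obtain f where f: "f \<in> (\<Pi>\<^sub>E i\<in>{..<r}. Ai i)" and xf: "x = finprod A f {..<r}" using surj_dec x by blast
  have fc: "f \<in> {..<r} \<rightarrow> carrier A" using PiE_fun f .
  define f' where "f' = restrict (\<lambda>j. f j [^]\<^bsub>A\<^esub> p i) {..<r}"
  define e where "e = restrict (\<lambda>j. \<one>\<^bsub>A\<^esub>) {..<r}"
  have f'E: "f' \<in> (\<Pi>\<^sub>E i\<in>{..<r}. Ai i)" unfolding f'_def
    using f Ai_sub subgroup_nat_pow_closed[OF A_group] by (auto simp: PiE_def Pi_def)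
  have eE: "e \<in> (\<Pi>\<^sub>E i\<in>{..<r}. Ai i)" unfolding e_def
    using Ai_sub subgroup.one_closed by (auto simp: PiE_def Pi_def)
  have "finprod A f' {..<r} = finprod A (\<lambda>j. f j [^]\<^bsub>A\<^esub> p i) {..<r}"
    unfolding f'_def by (rule A.finprod_cong') (use fc in auto)
  also have "\<dots> = x [^]\<^bsub>A\<^esub> p i"
    using hom_finprod_comm[OF A_comm pow_hom_comm[OF A_comm] _ fc, of "p i"] xf by simp
  also have "\<dots> = finprod A (\<lambda>j. \<one>\<^bsub>A\<^esub>) {..<r}" using xp by simp
  also have "\<dots> = finprod A e {..<r}" unfolding e_def by (rule A.finprod_cong') auto
  finally have "f' = e" using bij_betw_imp_inj_on[OF dirprod] f'E eE by (simp add: inj_on_def)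
  hence fp: "\<And>j. j < r \<Longrightarrow> f j [^]\<^bsub>A\<^esub> p i = \<one>\<^bsub>A\<^esub>"
    unfolding f'_def e_def by (metis lessThan_iff restrict_apply')
  have f1: "\<And>j. j < r \<Longrightarrow> j \<noteq> i \<Longrightarrow> f j = \<one>\<^bsub>A\<^esub>"
  proof -
    fix j assume j: "j < r" "j \<noteq> i"
    have fj: "f j \<in> Ai j" using f j by auto
    have "p j \<noteq> p i" using distinct j i by (auto simp: inj_on_def)
    hence "coprime (p i) (p j)" using primes i j primes_coprime by metis
    thus "f j = \<one>\<^bsub>A\<^esub>"
      using coprime_pow_one[OF A_group _ fp[OF j(1)], of "p j"] fj Ai_elem j Ai_carrier by blast
  qed
  have "x = finprod A (\<lambda>j. if j = i then f j else \<one>\<^bsub>A\<^esub>) {..<r}"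
    unfolding xf by (rule A.finprod_cong') (use fc f1 i in auto)
  also have "\<dots> = f i" using A.finprod_singleton_swap[of i "{..<r}" f] i fc by simp
  finally show ?thesis using f i by auto
qed

lemma auto_hom: "g \<in> auto A \<Longrightarrow> g \<in> hom A A" by (simp add: auto_def)

lemma auto_gh: "g \<in> auto A \<Longrightarrow> group_hom A A g"
  using auto_hom A_group by (simp add: group_hom_def group_hom_axioms_def)

lemma auto_closed: "g \<in> auto A \<Longrightarrow> x \<in> carrier A \<Longrightarrow> g x \<in> carrier A"
  by (rule group_hom.hom_closed[OF auto_gh])

lemma auto_mult: "g \<in> auto A \<Longrightarrow> x \<in> carrier A \<Longrightarrow> y \<in> carrier A \<Longrightarrow> g (x \<otimes>\<^bsub>A\<^esub> y) = g x \<otimes>\<^bsub>A\<^esub> g y"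
  by (rule hom_mult[OF auto_hom])

lemma auto_inv: "g \<in> auto A \<Longrightarrow> x \<in> carrier A \<Longrightarrow> g (inv\<^bsub>A\<^esub> x) = inv\<^bsub>A\<^esub> (g x)"
  by (rule group_hom.hom_inv[OF auto_gh])

lemma auto_one: "g \<in> auto A \<Longrightarrow> g \<one>\<^bsub>A\<^esub> = \<one>\<^bsub>A\<^esub>"
  by (rule group_hom.hom_one[OF auto_gh])

lemma auto_pow: "g \<in> auto A \<Longrightarrow> x \<in> carrier A \<Longrightarrow> g (x [^]\<^bsub>A\<^esub> (n::nat)) = g x [^]\<^bsub>A\<^esub> n"
  by (rule group_hom.hom_nat_pow[OF auto_gh])

lemma auto_inj: "g \<in> auto A \<Longrightarrow> inj_on g (carrier A)"
  by (simp add: auto_def Bij_def bij_betw_def)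

lemma auto_surj: "g \<in> auto A \<Longrightarrow> g ` carrier A = carrier A"
  by (simp add: auto_def Bij_def bij_betw_def)

lemma auto_ext: "g \<in> auto A \<Longrightarrow> g \<in> extensional (carrier A)"
  by (simp add: auto_def Bij_def)

lemma auto_eqI: "g \<in> auto A \<Longrightarrow> h \<in> auto A \<Longrightarrow> (\<And>x. x \<in> carrier A \<Longrightarrow> g x = h x) \<Longrightarrow> g = h"
  using auto_ext extensionalityI by metis

lemma auto_Ai: "g \<in> auto A \<Longrightarrow> i < r \<Longrightarrow> x \<in> Ai i \<Longrightarrow> g x \<in> Ai i"
proof -
  assume g: "g \<in> auto A" and i: "i < r" and x: "x \<in> Ai i"
  have xc: "x \<in> carrier A" using x Ai_carrier i by blast
  have "g x [^]\<^bsub>A\<^esub> p i = \<one>\<^bsub>A\<^esub>" using auto_pow[OF g xc] Ai_elem i x auto_one g by metis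
  thus ?thesis using Ai_char i auto_closed g xc by blast
qed

lemma eq_on_Ai:
  assumes g: "g \<in> auto A" and h: "h \<in> auto A" and eq: "\<And>i x. i < r \<Longrightarrow> x \<in> Ai i \<Longrightarrow> g x = h x"
  shows "g = h"
proof (rule auto_eqI[OF g h])
  interpret A: comm_group A by (rule A_comm)
  fix x assume x: "x \<in> carrier A"
  obtain f where f: "f \<in> (\<Pi>\<^sub>E i\<in>{..<r}. Ai i)" and xf: "x = finprod A f {..<r}" using surj_dec x by blast
  have fc: "f \<in> {..<r} \<rightarrow> carrier A" using PiE_fun f .
  have "g x = finprod A (\<lambda>i. g (f i)) {..<r}" using hom_finprod_comm[OF A_comm auto_hom[OF g] _ fc] xf by simp
  also have "\<dots> = finprod A (\<lambda>i. h (f i)) {..<r}"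
    by (rule A.finprod_cong') (use f eq auto_closed[OF h] fc in \<open>auto simp: Pi_def\<close>)
  also have "\<dots> = h x" using hom_finprod_comm[OF A_comm auto_hom[OF h] _ fc] xf by simp
  finally show "g x = h x" .
qed

lemma G_group: "group G" using group.AutoGroup[OF A_group] .

lemma G_carrier: "carrier G = auto A" by (simp add: AutoGroup_def BijGroup_def)

lemma auto_Bij: "g \<in> auto A \<Longrightarrow> g \<in> Bij (carrier A)" by (simp add: auto_def)

lemma G_mult: "g \<in> auto A \<Longrightarrow> h \<in> auto A \<Longrightarrow> x \<in> carrier A \<Longrightarrow> (g \<otimes>\<^bsub>G\<^esub> h) x = g (h x)"
  using auto_Bij by (simp add: AutoGroup_def BijGroup_def compose_def)

lemma G_one: "\<one>\<^bsub>G\<^esub> = (\<lambda>x\<in>carrier A. x)" by (simp add: AutoGroup_def BijGroup_def)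

lemma G_inv_closed: "g \<in> auto A \<Longrightarrow> inv\<^bsub>G\<^esub> g \<in> auto A"
  using group.inv_closed[OF G_group] G_carrier by blast

lemma G_inv1: "g \<in> auto A \<Longrightarrow> x \<in> carrier A \<Longrightarrow> g ((inv\<^bsub>G\<^esub> g) x) = x"
proof -
  assume g: "g \<in> auto A" and x: "x \<in> carrier A"
  have "g \<otimes>\<^bsub>G\<^esub> inv\<^bsub>G\<^esub> g = \<one>\<^bsub>G\<^esub>" using group.r_inv[OF G_group] g G_carrier by blast
  hence "(g \<otimes>\<^bsub>G\<^esub> inv\<^bsub>G\<^esub> g) x = x" using x G_one by simp
  thus ?thesis using G_mult[OF g G_inv_closed[OF g] x] by simp
qed

lemma G_inv2: "g \<in> auto A \<Longrightarrow> x \<in> carrier A \<Longrightarrow> (inv\<^bsub>G\<^esub> g) (g x) = x"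
proof -
  assume g: "g \<in> auto A" and x: "x \<in> carrier A"
  have "inv\<^bsub>G\<^esub> g \<otimes>\<^bsub>G\<^esub> g = \<one>\<^bsub>G\<^esub>" using group.l_inv[OF G_group] g G_carrier by blast
  hence "(inv\<^bsub>G\<^esub> g \<otimes>\<^bsub>G\<^esub> g) x = x" using x G_one by simp
  thus ?thesis using G_mult[OF G_inv_closed[OF g] g x] by simp
qed

lemma G_pow_closed: "g \<in> auto A \<Longrightarrow> g [^]\<^bsub>G\<^esub> (n::nat) \<in> auto A"
  using monoid.nat_pow_closed[OF group.is_monoid[OF G_group]] G_carrier by blast

lemma G_pow_Suc: "g \<in> auto A \<Longrightarrow> x \<in> carrier A \<Longrightarrow> (g [^]\<^bsub>G\<^esub> Suc n) x = g ((g [^]\<^bsub>G\<^esub> n) x)"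
proof -
  assume g: "g \<in> auto A" and x: "x \<in> carrier A"
  have "g [^]\<^bsub>G\<^esub> Suc n = g \<otimes>\<^bsub>G\<^esub> g [^]\<^bsub>G\<^esub> n"
    using monoid.nat_pow_Suc2[OF group.is_monoid[OF G_group]] g G_carrier by blast
  thus ?thesis using G_mult[OF g G_pow_closed[OF g] x] by simp
qed

lemma finG: "finite (carrier G)"
proof -
  have "auto A \<subseteq> carrier A \<rightarrow>\<^sub>E carrier A"
    using auto_ext auto_closed by (auto simp: PiE_def Pi_def extensional_def)
  moreover have "finite (carrier A \<rightarrow>\<^sub>E carrier A)" using finA by (simp add: finite_PiE)
  ultimately show ?thesis using G_carrier finite_subset by metis
qed

end


context dec
begin

sublocale GG: group G by (rule G_group)

definition stabset :: "nat \<Rightarrow> (nat \<Rightarrow> 'a set) \<Rightarrow> ('a \<Rightarrow> 'a) set" where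
  "stabset l S = {g \<in> auto A. (\<forall>j\<le>l. g ` S j \<subseteq> S j) \<and>
      (\<forall>j<l. \<forall>x\<in>S j. g x \<otimes>\<^bsub>A\<^esub> inv\<^bsub>A\<^esub> x \<in> S (Suc j))}"

lemma stab_subgroup:
  assumes sg: "\<And>j. j \<le> l \<Longrightarrow> subgroup (S j) A"
  shows "subgroup (stabset l S) G"
proof -
  interpret A: comm_group A by (rule A_comm)
  have Sc: "\<And>j x. j \<le> l \<Longrightarrow> x \<in> S j \<Longrightarrow> x \<in> carrier A" using sg subgroup.subset by blast
  have Sc2: "\<And>j x. j < l \<Longrightarrow> x \<in> S j \<Longrightarrow> x \<in> carrier A" using Sc less_imp_le by blast
  show ?thesis
  proof (rule GG.subgroupI)
    show "stabset l S \<subseteq> carrier G" unfolding stabset_def G_carrier by blast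
    show "stabset l S \<noteq> {}"
    proof -
      have "\<one>\<^bsub>G\<^esub> \<in> stabset l S"
        unfolding stabset_def
      proof (intro CollectI conjI allI impI ballI)
        show "\<one>\<^bsub>G\<^esub> \<in> auto A" using G_carrier GG.one_closed by blast
        fix j assume j: "j \<le> l"
        show "\<one>\<^bsub>G\<^esub> ` S j \<subseteq> S j" using Sc[OF j] by (auto simp: G_one)
      next
        fix j x assume j: "j < l" and x: "x \<in> S j"
        have "x \<in> carrier A" using Sc2 j x by blast
        thus "\<one>\<^bsub>G\<^esub> x \<otimes>\<^bsub>A\<^esub> inv\<^bsub>A\<^esub> x \<in> S (Suc j)"
          using sg[of "Suc j"] j subgroup.one_closed by (fastforce simp: G_one)
      qed
      thus ?thesis by blast
    qed
  next
    fix g assume g: "g \<in> stabset l S"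
    have ga: "g \<in> auto A" using g unfolding stabset_def by blast
    have gi: "\<And>j. j \<le> l \<Longrightarrow> g ` S j = S j"
    proof -
      fix j assume j: "j \<le> l"
      have Ssub: "S j \<subseteq> carrier A" using Sc[OF j] by blast
      have fin: "finite (S j)" using finite_subset[OF Ssub finA] .
      have "inj_on g (S j)" using inj_on_subset[OF auto_inj[OF ga] Ssub] .
      thus "g ` S j = S j" using endo_inj_surj[OF fin] g j unfolding stabset_def by blast
    qed
    let ?h = "inv\<^bsub>G\<^esub> g"
    have ha: "?h \<in> auto A" using G_inv_closed[OF ga] .
    show "?h \<in> stabset l S"
      unfolding stabset_def
    proof (intro CollectI conjI allI impI ballI)
      show "?h \<in> auto A" by (rule ha)
      fix j assume j: "j \<le> l"
      show "?h ` S j \<subseteq> S j"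
      proof
        fix y assume "y \<in> ?h ` S j"
        then obtain x where x: "x \<in> S j" "y = ?h x" by blast
        obtain z where z: "z \<in> S j" "x = g z" using gi[OF j] x(1) by blast
        have "y = z" using x z G_inv2[OF ga] Sc[OF j] by simp
        thus "y \<in> S j" using z by simp
      qed
    next
      fix j x assume j: "j < l" and x: "x \<in> S j"
      obtain z where z: "z \<in> S j" "x = g z" using gi[of j] j x by force
      have zc: "z \<in> carrier A" using Sc2 z j by blast
      have hx: "?h x = z" using z G_inv2[OF ga zc] by simp
      have "g z \<otimes>\<^bsub>A\<^esub> inv\<^bsub>A\<^esub> z \<in> S (Suc j)" using g j z unfolding stabset_def by blast
      hence "inv\<^bsub>A\<^esub> (g z \<otimes>\<^bsub>A\<^esub> inv\<^bsub>A\<^esub> z) \<in> S (Suc j)"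
        using sg[of "Suc j"] j subgroup.m_inv_closed by fastforce
      moreover have "inv\<^bsub>A\<^esub> (g z \<otimes>\<^bsub>A\<^esub> inv\<^bsub>A\<^esub> z) = z \<otimes>\<^bsub>A\<^esub> inv\<^bsub>A\<^esub> (g z)"
        using zc auto_closed[OF ga zc] by (simp add: A.inv_mult A.m_comm)
      ultimately show "?h x \<otimes>\<^bsub>A\<^esub> inv\<^bsub>A\<^esub> x \<in> S (Suc j)" using hx z by simp
    qed
  next
    fix g h assume g: "g \<in> stabset l S" and h: "h \<in> stabset l S"
    have ga: "g \<in> auto A" and ha: "h \<in> auto A" using g h unfolding stabset_def by blast+
    show "g \<otimes>\<^bsub>G\<^esub> h \<in> stabset l S"
      unfolding stabset_def
    proof (intro CollectI conjI allI impI ballI)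
      show "g \<otimes>\<^bsub>G\<^esub> h \<in> auto A" using GG.m_closed ga ha G_carrier by blast
      fix j assume j: "j \<le> l"
      show "(g \<otimes>\<^bsub>G\<^esub> h) ` S j \<subseteq> S j"
      proof
        fix y assume "y \<in> (g \<otimes>\<^bsub>G\<^esub> h) ` S j"
        then obtain x where x: "x \<in> S j" "y = (g \<otimes>\<^bsub>G\<^esub> h) x" by blast
        have "y = g (h x)" using x G_mult[OF ga ha] Sc[OF j] by simp
        moreover have "h x \<in> S j" using h j x unfolding stabset_def by blast
        ultimately show "y \<in> S j" using g j unfolding stabset_def by blast
      qed
    next
      fix j x assume j: "j < l" and x: "x \<in> S j"
      have xc: "x \<in> carrier A" using Sc2 j x by blast
      have "\<forall>j\<le>l. h ` S j \<subseteq> S j" using h unfolding stabset_def by blast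
      hence hx: "h x \<in> S j" using j x less_imp_le by blast
      have hxc: "h x \<in> carrier A" using auto_closed[OF ha xc] .
      have gxc: "g (h x) \<in> carrier A" using auto_closed[OF ga hxc] .
      have a1: "g (h x) \<otimes>\<^bsub>A\<^esub> inv\<^bsub>A\<^esub> (h x) \<in> S (Suc j)" using g j hx unfolding stabset_def by blast
      have a2: "h x \<otimes>\<^bsub>A\<^esub> inv\<^bsub>A\<^esub> x \<in> S (Suc j)" using h j x unfolding stabset_def by blast
      have "(g (h x) \<otimes>\<^bsub>A\<^esub> inv\<^bsub>A\<^esub> (h x)) \<otimes>\<^bsub>A\<^esub> (h x \<otimes>\<^bsub>A\<^esub> inv\<^bsub>A\<^esub> x) \<in> S (Suc j)"
        using a1 a2 sg[of "Suc j"] j subgroup.m_closed by fastforce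
      moreover have "(g (h x) \<otimes>\<^bsub>A\<^esub> inv\<^bsub>A\<^esub> (h x)) \<otimes>\<^bsub>A\<^esub> (h x \<otimes>\<^bsub>A\<^esub> inv\<^bsub>A\<^esub> x) = g (h x) \<otimes>\<^bsub>A\<^esub> inv\<^bsub>A\<^esub> x"
        using xc hxc gxc by (simp add: A.m_assoc[symmetric]) (simp add: A.m_assoc)
      ultimately show "(g \<otimes>\<^bsub>G\<^esub> h) x \<otimes>\<^bsub>A\<^esub> inv\<^bsub>A\<^esub> x \<in> S (Suc j)" using G_mult[OF ga ha xc] by simp
    qed
  qed
qed

lemma pow_fix: "f \<in> auto A \<Longrightarrow> x \<in> carrier A \<Longrightarrow> f x = x \<Longrightarrow> (f [^]\<^bsub>G\<^esub> (n::nat)) x = x"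
proof (induction n)
  case 0 thus ?case by (simp add: G_one)
next
  case (Suc n) thus ?case using G_pow_Suc by simp
qed

lemma pow_mod:
  assumes h: "h \<in> auto A" and x: "x \<in> carrier A" and fx: "(h [^]\<^bsub>G\<^esub> (q::nat)) x = x"
  shows "(h [^]\<^bsub>G\<^esub> (a::nat)) x = (h [^]\<^bsub>G\<^esub> (a mod q)) x"
proof -
  have hG: "h \<in> carrier G" using h G_carrier by simp
  interpret GG: group G by (rule G_group)
  have "h [^]\<^bsub>G\<^esub> a = h [^]\<^bsub>G\<^esub> (a mod q) \<otimes>\<^bsub>G\<^esub> (h [^]\<^bsub>G\<^esub> q) [^]\<^bsub>G\<^esub> (a div q)"
    using GG.nat_pow_mult[OF hG] GG.nat_pow_pow[OF hG] by (metis mod_div_mult_eq mult.commute)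
  moreover have "((h [^]\<^bsub>G\<^esub> q) [^]\<^bsub>G\<^esub> (a div q)) x = x"
    using pow_fix[OF G_pow_closed[OF h] x fx] .
  ultimately show ?thesis
    using G_mult[OF G_pow_closed[OF h] G_pow_closed[OF G_pow_closed[OF h]] x] by simp
qed

lemma stab_pow:
  assumes sg: "\<And>j. j \<le> l \<Longrightarrow> subgroup (S j) A" and S0: "S 0 = carrier A" and Sl: "S l = {\<one>\<^bsub>A\<^esub>}"
    and g: "g \<in> stabset l S" and i: "i < r"
  shows "\<And>x. x \<in> Ai i \<Longrightarrow> (g [^]\<^bsub>G\<^esub> (p i ^ l)) x = x"
proof -
  interpret A: comm_group A by (rule A_comm)
  have ga: "g \<in> auto A" using g unfolding stabset_def by blast
  have SG: "subgroup (stabset l S) G" using stab_subgroup sg by blast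
  have gpow: "\<And>n. g [^]\<^bsub>G\<^esub> (n::nat) \<in> stabset l S"
    using subgroup_nat_pow_closed[OF G_group SG g] by blast
  have Aisg: "subgroup (Ai i) A" using Ai_sub i by blast
  have main: "\<And>m. m \<le> l \<Longrightarrow> \<forall>x \<in> Ai i \<inter> S (l - m). (g [^]\<^bsub>G\<^esub> (p i ^ m)) x = x"
  proof -
    fix m show "m \<le> l \<Longrightarrow> \<forall>x \<in> Ai i \<inter> S (l - m). (g [^]\<^bsub>G\<^esub> (p i ^ m)) x = x"
    proof (induction m)
      case 0
      have "g [^]\<^bsub>G\<^esub> (1::nat) = g" using ga G_carrier GG.nat_pow_eone by simp
      thus ?case using Sl auto_one[OF ga] by simp
    next
      case (Suc m)
      show ?case
      proof
        fix x assume x: "x \<in> Ai i \<inter> S (l - Suc m)"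
        define f where "f = g [^]\<^bsub>G\<^esub> (p i ^ m)"
        have fS: "f \<in> stabset l S" using gpow f_def by simp
        have fa: "f \<in> auto A" using fS unfolding stabset_def by blast
        have xc: "x \<in> carrier A" using x Ai_carrier i by blast
        define z where "z = f x \<otimes>\<^bsub>A\<^esub> inv\<^bsub>A\<^esub> x"
        have lm: "l - Suc m < l" "Suc (l - Suc m) = l - m" using Suc.prems by auto
        have xS: "x \<in> S (l - Suc m)" and xAi: "x \<in> Ai i" using x by auto
        have "\<forall>j<l. \<forall>x\<in>S j. f x \<otimes>\<^bsub>A\<^esub> inv\<^bsub>A\<^esub> x \<in> S (Suc j)" using fS unfolding stabset_def by blast
        hence "f x \<otimes>\<^bsub>A\<^esub> inv\<^bsub>A\<^esub> x \<in> S (Suc (l - Suc m))" using lm(1) xS by blast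
        hence zS: "z \<in> S (l - m)" using lm(2) unfolding z_def by simp
        have fxA: "f x \<in> Ai i" using auto_Ai[OF fa i xAi] .
        have zA: "z \<in> Ai i" unfolding z_def
          using subgroup.m_closed[OF Aisg fxA subgroup.m_inv_closed[OF Aisg xAi]] .
        have zc: "z \<in> carrier A" using zA Ai_carrier i by blast
        have fz: "f z = z" using Suc.IH Suc.prems zS zA f_def by simp
        have fxc: "f x \<in> carrier A" using auto_closed[OF fa xc] .
        have fxz: "f x = z \<otimes>\<^bsub>A\<^esub> x" unfolding z_def using fxc xc
          by (simp add: A.m_assoc)
        have it: "\<And>n. (f [^]\<^bsub>G\<^esub> (n::nat)) x = x \<otimes>\<^bsub>A\<^esub> z [^]\<^bsub>A\<^esub> n"
        proof -
          fix n show "(f [^]\<^bsub>G\<^esub> (n::nat)) x = x \<otimes>\<^bsub>A\<^esub> z [^]\<^bsub>A\<^esub> n"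
          proof (induction n)
            case 0 thus ?case using xc by (simp add: G_one)
          next
            case (Suc n)
            have "(f [^]\<^bsub>G\<^esub> Suc n) x = f (x \<otimes>\<^bsub>A\<^esub> z [^]\<^bsub>A\<^esub> n)"
              using G_pow_Suc[OF fa xc] Suc.IH by simp
            also have "\<dots> = f x \<otimes>\<^bsub>A\<^esub> (f z) [^]\<^bsub>A\<^esub> n"
              using auto_mult[OF fa xc] auto_pow[OF fa zc] zc by simp
            also have "\<dots> = x \<otimes>\<^bsub>A\<^esub> z [^]\<^bsub>A\<^esub> Suc n"
              using fxz fz xc zc by (simp add: A.m_assoc A.m_comm A.nat_pow_Suc2 A.m_lcomm)
            finally show ?case .
          qed
        qed
        have "g [^]\<^bsub>G\<^esub> (p i ^ Suc m) = f [^]\<^bsub>G\<^esub> p i"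
          unfolding f_def using monoid.nat_pow_pow[OF group.is_monoid[OF G_group]] ga G_carrier
          by (simp add: mult.commute)
        hence "(g [^]\<^bsub>G\<^esub> (p i ^ Suc m)) x = x \<otimes>\<^bsub>A\<^esub> z [^]\<^bsub>A\<^esub> p i" using it by simp
        also have "\<dots> = x" using Ai_elem i zA xc by simp
        finally show "(g [^]\<^bsub>G\<^esub> (p i ^ Suc m)) x = x" .
      qed
    qed
  qed
  fix x assume "x \<in> Ai i"
  thus "(g [^]\<^bsub>G\<^esub> (p i ^ l)) x = x" using main[of l] S0 Ai_carrier i by auto
qed

lemma GL_sub_auto: "GL_factor A Ai r i \<subseteq> auto A" unfolding GL_factor_def by blast

lemma GL_subgroup: "subgroup (GL_factor A Ai r i) G"
proof (rule GG.subgroupI)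
  show "GL_factor A Ai r i \<subseteq> carrier G" using GL_sub_auto G_carrier by simp
  show "GL_factor A Ai r i \<noteq> {}"
  proof -
    have "\<one>\<^bsub>G\<^esub> \<in> GL_factor A Ai r i" unfolding GL_factor_def
      using G_carrier GG.one_closed Ai_carrier by (auto simp: G_one)
    thus ?thesis by blast
  qed
next
  fix g assume g: "g \<in> GL_factor A Ai r i"
  have ga: "g \<in> auto A" using g GL_sub_auto by blast
  show "inv\<^bsub>G\<^esub> g \<in> GL_factor A Ai r i" unfolding GL_factor_def
  proof (intro CollectI conjI allI impI ballI)
    show "inv\<^bsub>G\<^esub> g \<in> auto A" using G_inv_closed[OF ga] .
    fix j x assume j: "j < r" "j \<noteq> i" and x: "x \<in> Ai j"
    have "g x = x" using g j x unfolding GL_factor_def by blast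
    moreover have "x \<in> carrier A" using x Ai_carrier j(1) by blast
    ultimately show "(inv\<^bsub>G\<^esub> g) x = x" using G_inv2[OF ga, of x] by simp
  qed
next
  fix g h assume g: "g \<in> GL_factor A Ai r i" and h: "h \<in> GL_factor A Ai r i"
  have ga: "g \<in> auto A" and ha: "h \<in> auto A" using g h GL_sub_auto by blast+
  show "g \<otimes>\<^bsub>G\<^esub> h \<in> GL_factor A Ai r i" unfolding GL_factor_def
  proof (intro CollectI conjI allI impI ballI)
    show "g \<otimes>\<^bsub>G\<^esub> h \<in> auto A" using GG.m_closed ga ha G_carrier by blast
    fix j x assume j: "j < r" "j \<noteq> i" and x: "x \<in> Ai j"
    have "g x = x" "h x = x" using g h j x unfolding GL_factor_def by blast+
    moreover have "x \<in> carrier A" using x Ai_carrier j(1) by blast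
    ultimately show "(g \<otimes>\<^bsub>G\<^esub> h) x = x" using G_mult[OF ga ha, of x] by simp
  qed
qed

lemma GL_conj:
  assumes a: "a \<in> auto A" and g: "g \<in> GL_factor A Ai r i"
  shows "a \<otimes>\<^bsub>G\<^esub> g \<otimes>\<^bsub>G\<^esub> inv\<^bsub>G\<^esub> a \<in> GL_factor A Ai r i"
proof -
  have ga: "g \<in> auto A" using g GL_sub_auto by blast
  have ia: "inv\<^bsub>G\<^esub> a \<in> auto A" using G_inv_closed[OF a] .
  have ag: "a \<otimes>\<^bsub>G\<^esub> g \<in> auto A" using GG.m_closed a ga G_carrier by blast
  show ?thesis unfolding GL_factor_def
  proof (intro CollectI conjI allI impI ballI)
    show "a \<otimes>\<^bsub>G\<^esub> g \<otimes>\<^bsub>G\<^esub> inv\<^bsub>G\<^esub> a \<in> auto A" using GG.m_closed ag ia G_carrier by blast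
    fix j x assume j: "j < r" "j \<noteq> i" and x: "x \<in> Ai j"
    have xc: "x \<in> carrier A" using x Ai_carrier j by blast
    have y: "(inv\<^bsub>G\<^esub> a) x \<in> Ai j" using auto_Ai[OF ia j(1) x] .
    have "g ((inv\<^bsub>G\<^esub> a) x) = (inv\<^bsub>G\<^esub> a) x" using g j y unfolding GL_factor_def by blast
    hence "(a \<otimes>\<^bsub>G\<^esub> g \<otimes>\<^bsub>G\<^esub> inv\<^bsub>G\<^esub> a) x = a ((inv\<^bsub>G\<^esub> a) x)"
      using G_mult[OF ag ia xc] G_mult[OF a ga] auto_closed[OF ia xc] by simp
    thus "(a \<otimes>\<^bsub>G\<^esub> g \<otimes>\<^bsub>G\<^esub> inv\<^bsub>G\<^esub> a) x = x" using G_inv1[OF a xc] by simp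
  qed
qed

end


context dec
begin

lemma inv_mod_exists:
  assumes "coprime (a::nat) n" "n \<ge> 2"
  shows "\<exists>t. (a * t) mod n = 1"
proof -
  have a0: "a \<noteq> 0"
  proof
    assume "a = 0"
    hence "n = 1" using assms(1) by simp
    thus False using assms(2) by simp
  qed
  obtain x y where "a * x = n * y + gcd a n" using bezout_nat[OF a0] by blast
  hence "a * x = n * y + 1" using assms(1) by simp
  hence "(a * x) mod n = Suc (n * y) mod n" by simp
  also have "\<dots> = Suc ((n * y) mod n) mod n" by (rule mod_Suc_eq[symmetric])
  also have "\<dots> = 1" using assms(2) by simp
  finally have "(a * x) mod n = 1" .
  thus ?thesis by blast
qed

lemma M3:
  assumes U_sub: "subgroup U G" and H: "normal H (G\<lparr>carrier := U\<rparr>)" and cs: "centralizes_series A H"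
  shows "H \<subseteq> O_U A Ai p r U"
proof (rule subsetI)
  obtain l S where W: "S 0 = carrier A \<and> S l = {\<one>\<^bsub>A\<^esub>} \<and>
        (\<forall>j\<le>l. subgroup (S j) A) \<and>
        (\<forall>j<l. S (Suc j) \<subset> S j) \<and>
        (\<forall>n\<in>H. \<forall>j\<le>l. n ` S j \<subseteq> S j) \<and>
        (\<forall>n\<in>H. \<forall>j<l. \<forall>x\<in>S j. n x \<otimes>\<^bsub>A\<^esub> inv\<^bsub>A\<^esub> x \<in> S (Suc j))"
    using cs unfolding centralizes_series_def by (elim exE) (rule that)
  have S0: "S 0 = carrier A" and Sl: "S l = {\<one>\<^bsub>A\<^esub>}" and sg: "\<forall>j\<le>l. subgroup (S j) A"
    and inv: "\<forall>n\<in>H. \<forall>j\<le>l. n ` S j \<subseteq> S j"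
    and com: "\<forall>n\<in>H. \<forall>j<l. \<forall>x\<in>S j. n x \<otimes>\<^bsub>A\<^esub> inv\<^bsub>A\<^esub> x \<in> S (Suc j)"
    using conjunct1[OF W] conjunct1[OF conjunct2[OF W]] conjunct1[OF conjunct2[OF conjunct2[OF W]]]
      conjunct1[OF conjunct2[OF conjunct2[OF conjunct2[OF conjunct2[OF W]]]]]
      conjunct2[OF conjunct2[OF conjunct2[OF conjunct2[OF conjunct2[OF W]]]]] by - assumption+
  have HU: "H \<subseteq> U" using normal_imp_subgroup[OF H] subgroup.subset by force
  have Ua: "U \<subseteq> auto A" using U_sub subgroup.subset G_carrier by blast
  have sgH: "subgroup H G" using GG.incl_subgroup[OF U_sub normal_imp_subgroup[OF H]] .
  have HS: "H \<subseteq> stabset l S" unfolding stabset_def using HU Ua inv com by blast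
  define q where "q = (\<lambda>j. p j ^ Suc l)"
  have q2: "\<And>j. j < r \<Longrightarrow> q j \<ge> 2"
  proof -
    fix j assume "j < r"
    hence "p j \<ge> 2" using primes prime_ge_2_nat by blast
    hence "2 ^ Suc l \<le> p j ^ Suc l" by (rule power_mono) simp
    moreover have "(2::nat) ^ Suc l \<ge> 2" by simp
    ultimately show "q j \<ge> 2" unfolding q_def by linarith
  qed
  have ha: "\<And>h. h \<in> H \<Longrightarrow> h \<in> auto A" using HU Ua by blast
  have hq: "\<And>h j x. h \<in> H \<Longrightarrow> j < r \<Longrightarrow> x \<in> Ai j \<Longrightarrow> (h [^]\<^bsub>G\<^esub> q j) x = x"
  proof -
    fix h j x assume h: "h \<in> H" and j: "j < r" and x: "x \<in> Ai j"
    have xc: "x \<in> carrier A" using x Ai_carrier j by blast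
    have "(h [^]\<^bsub>G\<^esub> (p j ^ l)) x = x"
      using stab_pow[of l S, OF _ S0 Sl _ j x] sg HS h by blast
    hence "((h [^]\<^bsub>G\<^esub> (p j ^ l)) [^]\<^bsub>G\<^esub> p j) x = x"
      using pow_fix[OF G_pow_closed[OF ha[OF h]] xc] by blast
    moreover have "(h [^]\<^bsub>G\<^esub> (p j ^ l)) [^]\<^bsub>G\<^esub> p j = h [^]\<^bsub>G\<^esub> q j"
      unfolding q_def using GG.nat_pow_pow ha[OF h] G_carrier by (simp add: mult.commute)
    ultimately show "(h [^]\<^bsub>G\<^esub> q j) x = x" by simp
  qed
  define Qi where "Qi = (\<lambda>i. \<Prod>j\<in>{..<r} - {i}. q j)"
  have cop: "\<And>i. i < r \<Longrightarrow> coprime (Qi i) (q i)"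
  proof -
    fix i assume i: "i < r"
    show "coprime (Qi i) (q i)" unfolding Qi_def
    proof (rule prod_coprime_left)
      fix j assume j: "j \<in> {..<r} - {i}"
      have "p j \<noteq> p i" using distinct j i by (auto simp: inj_on_def)
      hence "coprime (p j) (p i)" using primes i j primes_coprime by blast
      thus "coprime (q j) (q i)" unfolding q_def by (simp add: coprime_power_left_iff coprime_power_right_iff)
    qed
  qed
  have "\<forall>i. \<exists>ti. i < r \<longrightarrow> (Qi i * ti) mod q i = 1"
  proof
    fix i show "\<exists>ti. i < r \<longrightarrow> (Qi i * ti) mod q i = 1"
    proof (cases "i < r")
      case True
      then obtain ti where "(Qi i * ti) mod q i = 1" using inv_mod_exists[OF cop[OF True] q2[OF True]] by blast
      thus ?thesis by blast
    next
      case False thus ?thesis by blast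
    qed
  qed
  hence "\<exists>t. \<forall>i. i < r \<longrightarrow> (Qi i * t i) mod q i = 1" by (rule choice)
  then obtain t where t: "\<And>i. i < r \<Longrightarrow> (Qi i * t i) mod q i = 1" by blast
  define m where "m = (\<lambda>i. Qi i * t i)"
  have m1: "\<And>i. i < r \<Longrightarrow> m i mod q i = 1" using t m_def by simp
  have m0: "\<And>i j. i < r \<Longrightarrow> j < r \<Longrightarrow> j \<noteq> i \<Longrightarrow> q j dvd m i"
  proof -
    fix i j assume "i < r" "j < r" "j \<noteq> i"
    hence "q j dvd Qi i" unfolding Qi_def by (intro dvd_prodI) auto
    thus "q j dvd m i" unfolding m_def by simp
  qed
  define K where "K = (\<lambda>i. H \<inter> GL_factor A Ai r i)"
  have sgK: "\<And>i. subgroup (K i) G" unfolding K_def using GG.subgroups_Inter_pair[OF sgH GL_subgroup] by blast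
  fix h assume h: "h \<in> H"
  have hpowH: "\<And>n. h [^]\<^bsub>G\<^esub> (n::nat) \<in> H" using subgroup_nat_pow_closed[OF G_group sgH h] .
  have hmK: "\<And>i. i < r \<Longrightarrow> h [^]\<^bsub>G\<^esub> m i \<in> K i"
  proof -
    fix i assume i: "i < r"
    have "h [^]\<^bsub>G\<^esub> m i \<in> GL_factor A Ai r i" unfolding GL_factor_def
    proof (intro CollectI conjI allI impI ballI)
      show "h [^]\<^bsub>G\<^esub> m i \<in> auto A" using G_pow_closed[OF ha[OF h]] .
      fix j x assume j: "j < r" "j \<noteq> i" and x: "x \<in> Ai j"
      have xc: "x \<in> carrier A" using x Ai_carrier j by blast
      have "(h [^]\<^bsub>G\<^esub> m i) x = (h [^]\<^bsub>G\<^esub> (m i mod q j)) x"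
        using pow_mod[OF ha[OF h] xc hq[OF h j(1) x]] .
      also have "m i mod q j = 0" using m0[OF i j(1) j(2)] by simp
      finally show "(h [^]\<^bsub>G\<^esub> m i) x = x" by (simp add: G_one xc)
    qed
    thus "h [^]\<^bsub>G\<^esub> m i \<in> K i" unfolding K_def using hpowH by blast
  qed
  define M where "M = (\<Sum>i<r. m i)"
  have hM: "h [^]\<^bsub>G\<^esub> M = h"
  proof (rule eq_on_Ai[OF G_pow_closed[OF ha[OF h]] ha[OF h]])
    fix j x assume j: "j < r" and x: "x \<in> Ai j"
    have xc: "x \<in> carrier A" using x Ai_carrier j by blast
    have "M = m j + (\<Sum>i\<in>{..<r} - {j}. m i)" unfolding M_def using j
      by (simp add: sum.remove)
    moreover have "q j dvd (\<Sum>i\<in>{..<r} - {j}. m i)" by (rule dvd_sum) (use m0 j in auto)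
    ultimately have "M mod q j = 1" using m1[OF j] by (metis mod_add_right_eq add.right_neutral dvd_imp_mod_0)
    hence "(h [^]\<^bsub>G\<^esub> M) x = (h [^]\<^bsub>G\<^esub> (1::nat)) x"
      using pow_mod[OF ha[OF h] xc hq[OF h j x], of M] by simp
    thus "(h [^]\<^bsub>G\<^esub> M) x = h x" using ha[OF h] G_carrier GG.nat_pow_eone by simp
  qed
  have gen: "\<And>n. n \<le> r \<Longrightarrow> h [^]\<^bsub>G\<^esub> (\<Sum>i<n. m i) \<in> generate G (\<Union>i<r. K i)"
  proof -
    fix n show "n \<le> r \<Longrightarrow> h [^]\<^bsub>G\<^esub> (\<Sum>i<n. m i) \<in> generate G (\<Union>i<r. K i)"
    proof (induction n)
      case 0 thus ?case using generate.one by simp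
    next
      case (Suc n)
      have "h [^]\<^bsub>G\<^esub> (\<Sum>i<Suc n. m i) = h [^]\<^bsub>G\<^esub> (\<Sum>i<n. m i) \<otimes>\<^bsub>G\<^esub> h [^]\<^bsub>G\<^esub> m n"
        using GG.nat_pow_mult ha[OF h] G_carrier by simp
      moreover have "h [^]\<^bsub>G\<^esub> m n \<in> generate G (\<Union>i<r. K i)"
        using hmK[of n] Suc.prems by (intro generate.incl) auto
      ultimately show ?case using Suc generate.eng by simp
    qed
  qed
  have hgen: "h \<in> generate G (\<Union>i<r. K i)" using gen[of r] hM M_def by simp
  have KO: "\<And>i. i < r \<Longrightarrow> K i \<subseteq> O_p (G\<lparr>carrier := sigma A Ai r U i\<rparr>) (p i)"
  proof -
    fix i assume i: "i < r"
    let ?s = "sigma A Ai r U i"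
    have sgs: "subgroup ?s G" unfolding sigma_def using GG.subgroups_Inter_pair[OF U_sub GL_subgroup] .
    have gs: "group (G\<lparr>carrier := ?s\<rparr>)" using GG.subgroup_imp_group[OF sgs] .
    have fins: "finite (carrier (G\<lparr>carrier := ?s\<rparr>))" using finG sgs subgroup.subset finite_subset by fastforce
    have Ks: "K i \<subseteq> ?s" unfolding K_def sigma_def using HU by blast
    have sgKs: "subgroup (K i) (G\<lparr>carrier := ?s\<rparr>)" using GG.subgroup_incl[OF sgK sgs Ks] .
    have nK: "normal (K i) (G\<lparr>carrier := ?s\<rparr>)"
    proof -
      have "\<forall>x\<in>carrier (G\<lparr>carrier := ?s\<rparr>). \<forall>k\<in>K i. x \<otimes>\<^bsub>G\<lparr>carrier := ?s\<rparr>\<^esub> k \<otimes>\<^bsub>G\<lparr>carrier := ?s\<rparr>\<^esub> inv\<^bsub>G\<lparr>carrier := ?s\<rparr>\<^esub> x \<in> K i"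
      proof (intro ballI)
        fix x k assume x: "x \<in> carrier (G\<lparr>carrier := ?s\<rparr>)" and k: "k \<in> K i"
        have xs: "x \<in> ?s" using x by simp
        have invx: "inv\<^bsub>G\<lparr>carrier := ?s\<rparr>\<^esub> x = inv\<^bsub>G\<^esub> x" using GG.m_inv_consistent[OF sgs xs] .
        have xU: "x \<in> U" and xGL: "x \<in> GL_factor A Ai r i" using xs unfolding sigma_def by auto
        have gU: "group (G\<lparr>carrier := U\<rparr>)" using GG.subgroup_imp_group[OF U_sub] .
        have "x \<otimes>\<^bsub>G\<lparr>carrier := U\<rparr>\<^esub> k \<otimes>\<^bsub>G\<lparr>carrier := U\<rparr>\<^esub> inv\<^bsub>G\<lparr>carrier := U\<rparr>\<^esub> x \<in> H"
          using group.normal_inv_iff[OF gU] H xU k unfolding K_def by auto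
        hence c1: "x \<otimes>\<^bsub>G\<^esub> k \<otimes>\<^bsub>G\<^esub> inv\<^bsub>G\<^esub> x \<in> H" using GG.m_inv_consistent[OF U_sub xU] by simp
        have kGL: "k \<in> GL_factor A Ai r i" using k unfolding K_def by blast
        have "x \<otimes>\<^bsub>G\<^esub> k \<otimes>\<^bsub>G\<^esub> inv\<^bsub>G\<^esub> x \<in> GL_factor A Ai r i"
          using subgroup.m_closed[OF GL_subgroup] subgroup.m_inv_closed[OF GL_subgroup] xGL kGL by metis
        thus "x \<otimes>\<^bsub>G\<lparr>carrier := ?s\<rparr>\<^esub> k \<otimes>\<^bsub>G\<lparr>carrier := ?s\<rparr>\<^esub> inv\<^bsub>G\<lparr>carrier := ?s\<rparr>\<^esub> x \<in> K i"
          using c1 invx unfolding K_def by simp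
      qed
      thus ?thesis using group.normal_inv_iff[OF gs] sgKs by blast
    qed
    have gK: "group (G\<lparr>carrier := K i\<rparr>)" using GG.subgroup_imp_group[OF sgK] .
    have finK: "finite (carrier (G\<lparr>carrier := K i\<rparr>))" using finG sgK subgroup.subset finite_subset by fastforce
    have ex: "\<And>k. k \<in> carrier (G\<lparr>carrier := K i\<rparr>) \<Longrightarrow> \<exists>e. k [^]\<^bsub>G\<lparr>carrier := K i\<rparr>\<^esub> (p i ^ e) = \<one>\<^bsub>G\<lparr>carrier := K i\<rparr>\<^esub>"
    proof -
      fix k assume "k \<in> carrier (G\<lparr>carrier := K i\<rparr>)"
      hence k: "k \<in> K i" by simp
      have kH: "k \<in> H" and kGL: "k \<in> GL_factor A Ai r i" using k unfolding K_def by auto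
      have "k [^]\<^bsub>G\<^esub> q i = \<one>\<^bsub>G\<^esub>"
      proof (rule eq_on_Ai[OF G_pow_closed[OF ha[OF kH]]])
        show "\<one>\<^bsub>G\<^esub> \<in> auto A" using GG.one_closed G_carrier by simp
        fix j x assume j: "j < r" and x: "x \<in> Ai j"
        have xc: "x \<in> carrier A" using x Ai_carrier j by blast
        show "(k [^]\<^bsub>G\<^esub> q i) x = \<one>\<^bsub>G\<^esub> x"
        proof (cases "j = i")
          case True thus ?thesis using hq[OF kH j x] xc by (simp add: G_one)
        next
          case False
          hence "k x = x" using kGL j x unfolding GL_factor_def by blast
          thus ?thesis using pow_fix[OF ha[OF kH] xc] xc by (simp add: G_one)
        qed
      qed
      hence "k [^]\<^bsub>G\<lparr>carrier := K i\<rparr>\<^esub> (p i ^ Suc l) = \<one>\<^bsub>G\<lparr>carrier := K i\<rparr>\<^esub>"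
        using GG.nat_pow_consistent[of k "q i" "K i"] unfolding q_def by simp
      thus "\<exists>e. k [^]\<^bsub>G\<lparr>carrier := K i\<rparr>\<^esub> (p i ^ e) = \<one>\<^bsub>G\<lparr>carrier := K i\<rparr>\<^esub>" by blast
    qed
    obtain e where "order (G\<lparr>carrier := K i\<rparr>) = p i ^ e"
      using pgroup_of_exp[OF gK finK _ ex] primes i by blast
    hence cK: "card (K i) = p i ^ e" by (simp add: order_def)
    show "K i \<subseteq> O_p (G\<lparr>carrier := ?s\<rparr>) (p i)"
      using Op_props(3)[OF gs fins _ nK cK] primes i by blast
  qed
  have "generate G (\<Union>i<r. K i) \<subseteq> generate G (\<Union>i<r. O_p (G\<lparr>carrier := sigma A Ai r U i\<rparr>) (p i))"
    using KO by (intro GG.mono_generate) blast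
  thus "h \<in> O_U A Ai p r U" using hgen unfolding O_U_def by blast
qed

end


lemma rcoset_upd: "r_coset (M\<lparr>carrier := Y\<rparr>) K x = r_coset M K x"
  by (simp add: r_coset_def)

context dec
begin

lemma FP:
  assumes sgP: "subgroup P G" and Pa: "P \<subseteq> auto A" and cP: "card P = p i ^ n" and i: "i < r"
    and sgC: "subgroup C A" and CA: "C \<subseteq> Ai i" and Cne: "C \<noteq> Ai i"
    and Cinv: "\<And>g. g \<in> P \<Longrightarrow> g ` C \<subseteq> C"
  shows "\<exists>x \<in> Ai i - C. \<forall>g\<in>P. g x \<otimes>\<^bsub>A\<^esub> inv\<^bsub>A\<^esub> x \<in> C"
proof -
  interpret A: comm_group A by (rule A_comm)
  let ?B = "A\<lparr>carrier := Ai i\<rparr>"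
  have sgAi: "subgroup (Ai i) A" using Ai_sub i by blast
  interpret B: group ?B using A.subgroup_imp_group[OF sgAi] .
  have sgCB: "subgroup C ?B" using A.subgroup_incl[OF sgC sgAi CA] .
  have Ac: "Ai i \<subseteq> carrier A" using Ai_carrier i .
  have Cc: "C \<subseteq> carrier A" using CA Ac by blast
  have finAi: "finite (Ai i)" using Ai_fin i .
  have finC: "finite C" using finite_subset[OF CA finAi] .
  have pr: "Factorial_Ring.prime (p i)" using primes i by blast
  define E where "E = rcosets\<^bsub>?B\<^esub> C"
  have Eform: "\<And>T. T \<in> E \<longleftrightarrow> (\<exists>a\<in>Ai i. T = C #>\<^bsub>A\<^esub> a)"
    unfolding E_def RCOSETS_def rcoset_upd by auto
  have finE: "finite E" unfolding E_def RCOSETS_def using finAi by simp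
  have gC: "\<And>g. g \<in> P \<Longrightarrow> g ` C = C"
  proof -
    fix g assume g: "g \<in> P"
    have "inj_on g C" using inj_on_subset[OF auto_inj Cc] Pa g by blast
    thus "g ` C = C" using endo_inj_surj[OF finC Cinv[OF g]] by blast
  qed
  have gT: "\<And>g a. g \<in> P \<Longrightarrow> a \<in> Ai i \<Longrightarrow> g ` (C #>\<^bsub>A\<^esub> a) = C #>\<^bsub>A\<^esub> g a"
  proof -
    fix g a assume g: "g \<in> P" and a: "a \<in> Ai i"
    have ga: "g \<in> auto A" using g Pa by blast
    have ac: "a \<in> carrier A" using a Ac by blast
    have rc: "\<And>b. C #>\<^bsub>A\<^esub> b = (\<lambda>c. c \<otimes>\<^bsub>A\<^esub> b) ` C" unfolding r_coset_def by auto
    have "g ` (C #>\<^bsub>A\<^esub> a) = (\<lambda>c. g (c \<otimes>\<^bsub>A\<^esub> a)) ` C" unfolding rc image_image ..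
    also have "\<dots> = (\<lambda>c. g c \<otimes>\<^bsub>A\<^esub> g a) ` C"
      by (rule image_cong) (use auto_mult[OF ga _ ac] Cc in auto)
    finally have "g ` (C #>\<^bsub>A\<^esub> a) = (\<lambda>c. g c \<otimes>\<^bsub>A\<^esub> g a) ` C" .
    also have "\<dots> = (\<lambda>c. c \<otimes>\<^bsub>A\<^esub> g a) ` (g ` C)" by auto
    also have "\<dots> = C #>\<^bsub>A\<^esub> g a" unfolding gC[OF g] r_coset_def by auto
    finally show "g ` (C #>\<^bsub>A\<^esub> a) = C #>\<^bsub>A\<^esub> g a" .
  qed
  have Tc: "\<And>T. T \<in> E \<Longrightarrow> T \<subseteq> carrier A"
    using Eform Cc Ac by (auto simp: r_coset_def)
  define \<phi> :: "('a \<Rightarrow> 'a) \<Rightarrow> 'a set \<Rightarrow> 'a set" where "\<phi> = (\<lambda>g. \<lambda>T\<in>E. g ` T)"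
  let ?GP = "G\<lparr>carrier := P\<rparr>"
  have gGP: "group ?GP" using GG.subgroup_imp_group[OF sgP] .
  have phiBij: "\<And>g. g \<in> P \<Longrightarrow> \<phi> g \<in> Bij E"
  proof -
    fix g assume g: "g \<in> P"
    have ga: "g \<in> auto A" using g Pa by blast
    have into: "\<phi> g ` E \<subseteq> E"
    proof
      fix T assume "T \<in> \<phi> g ` E"
      then obtain T0 where T0: "T0 \<in> E" "T = \<phi> g T0" by blast
      then obtain a where a: "a \<in> Ai i" "T0 = C #>\<^bsub>A\<^esub> a" using Eform by blast
      have "T = C #>\<^bsub>A\<^esub> g a" using T0 a gT[OF g a(1)] unfolding \<phi>_def by simp
      thus "T \<in> E" using Eform auto_Ai[OF ga i a(1)] by blast
    qed
    have inj: "inj_on (\<phi> g) E"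
    proof (rule inj_onI)
      fix T1 T2 assume T: "T1 \<in> E" "T2 \<in> E" "\<phi> g T1 = \<phi> g T2"
      hence "g ` T1 = g ` T2" unfolding \<phi>_def by simp
      thus "T1 = T2" using inj_on_image_eq_iff[OF auto_inj[OF ga]] Tc T by blast
    qed
    have "\<phi> g ` E = E" using endo_inj_surj[OF finE into inj] .
    hence "bij_betw (\<phi> g) E E" using inj by (simp add: bij_betw_def)
    moreover have "\<phi> g \<in> extensional E" unfolding \<phi>_def by simp
    ultimately show "\<phi> g \<in> Bij E" by (simp add: Bij_def)
  qed
  have act: "group_action ?GP E \<phi>"
    unfolding group_action_def
  proof (rule group_hom.intro)
    show "group ?GP" by (rule gGP)
    show "group (BijGroup E)" by (rule group_BijGroup)
    show "group_hom_axioms ?GP (BijGroup E) \<phi>"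
      unfolding group_hom_axioms_def
    proof (rule homI)
      fix g assume "g \<in> carrier ?GP"
      thus "\<phi> g \<in> carrier (BijGroup E)" using phiBij by (simp add: BijGroup_def)
    next
      fix g h assume g: "g \<in> carrier ?GP" and h: "h \<in> carrier ?GP"
      have gP: "g \<in> P" and hP: "h \<in> P" using g h by auto
      have ga: "g \<in> auto A" and ha: "h \<in> auto A" using gP hP Pa by auto
      have "\<phi> (g \<otimes>\<^bsub>?GP\<^esub> h) = (\<lambda>T\<in>E. (g \<otimes>\<^bsub>G\<^esub> h) ` T)" unfolding \<phi>_def by simp
      also have "\<dots> = (\<lambda>T\<in>E. g ` (h ` T))"
      proof (rule restrict_ext)
        fix T assume "T \<in> E"
        hence "T \<subseteq> carrier A" using Tc by blast
        thus "(g \<otimes>\<^bsub>G\<^esub> h) ` T = g ` (h ` T)" using G_mult[OF ga ha] by (auto simp: image_iff subset_iff)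
      qed
      also have "\<dots> = compose E (\<phi> g) (\<phi> h)"
        unfolding compose_def \<phi>_def
      proof (rule restrict_ext)
        fix T assume T: "T \<in> E"
        have "h ` T \<in> E" using phiBij[OF hP] T unfolding \<phi>_def Bij_def bij_betw_def by auto
        thus "g ` (h ` T) = (\<lambda>T\<in>E. g ` T) ((\<lambda>T\<in>E. h ` T) T)" using T by simp
      qed
      also have "\<dots> = \<phi> g \<otimes>\<^bsub>BijGroup E\<^esub> \<phi> h"
        using phiBij[OF gP] phiBij[OF hP] by (simp add: BijGroup_def)
      finally show "\<phi> (g \<otimes>\<^bsub>?GP\<^esub> h) = \<phi> g \<otimes>\<^bsub>BijGroup E\<^esub> \<phi> h" .
    qed
  qed
  have finP: "finite (carrier ?GP)" using finG sgP subgroup.subset finite_subset by fastforce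
  have oGP: "order ?GP = p i ^ n" using cP by (simp add: order_def)
  let ?F = "{T\<in>E. \<forall>g\<in>carrier ?GP. \<phi> g T = T}"
  have modeq: "card E mod p i = card ?F mod p i"
    using group_action.fixed_mod[OF act finP finE oGP pr] .
  have lag: "card E * card C = card (Ai i)"
    using B.lagrange[OF sgCB] unfolding E_def by (simp add: order_def)
  have "card C < card (Ai i)" using psubset_card_mono[OF finAi] CA Cne by blast
  hence "card E \<noteq> 1" using lag by auto
  moreover have "card E dvd p i ^ d i" using lag Ai_card i by (metis dvd_triv_left)
  ultimately obtain j where j: "card E = p i ^ j" "j \<noteq> 0" using ppow_dvd[OF pr] by (metis power_0)
  hence "p i dvd card E" by (metis dvd_power gr0I)
  hence "card E mod p i = 0" by simp
  hence "card ?F mod p i = 0" using modeq by simp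
  hence dF: "p i dvd card ?F" by (simp add: dvd_eq_mod_eq_0)
  have CE: "C \<in> E"
  proof -
    have "C #>\<^bsub>A\<^esub> \<one>\<^bsub>A\<^esub> = C" using Cc by simp
    moreover have "\<one>\<^bsub>A\<^esub> \<in> Ai i" using subgroup.one_closed[OF sgAi] .
    ultimately show ?thesis using Eform by metis
  qed
  have CF: "C \<in> ?F" using CE gC unfolding \<phi>_def by simp
  have finF: "finite ?F" using finE by simp
  have "card ?F \<noteq> 0" using CF finF by auto
  hence "card ?F \<ge> p i" using dvd_imp_le[OF dF] by simp
  hence "card ?F \<ge> 2" using prime_ge_2_nat[OF pr] by linarith
  hence "\<not> ?F \<subseteq> {C}" using card_mono[of "{C}" ?F] by auto
  then obtain T where T: "T \<in> ?F" "T \<noteq> C" by blast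
  have "T \<in> E" using T(1) by blast
  then obtain a where a: "a \<in> Ai i" "T = C #>\<^bsub>A\<^esub> a" using Eform by blast
  have ac: "a \<in> carrier A" using a Ac by blast
  have aC: "a \<notin> C"
  proof
    assume "a \<in> C"
    hence "C #>\<^bsub>A\<^esub> a = C" using subgroup.rcos_const[OF sgC A.is_group] by blast
    thus False using T a by simp
  qed
  have "\<forall>g\<in>P. g a \<otimes>\<^bsub>A\<^esub> inv\<^bsub>A\<^esub> a \<in> C"
  proof
    fix g assume g: "g \<in> P"
    have "\<phi> g T = T" using T g by simp
    moreover have "T \<in> E" using T by blast
    ultimately have "g ` T = T" unfolding \<phi>_def by simp
    moreover have "a \<in> T" using a A.rcos_self[OF ac sgC] by simp
    ultimately have "g a \<in> C #>\<^bsub>A\<^esub> a" using a by blast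
    thus "g a \<otimes>\<^bsub>A\<^esub> inv\<^bsub>A\<^esub> a \<in> C" using subgroup.rcos_module_imp[OF sgC A.is_group ac] by blast
  qed
  thus ?thesis using a aC by blast
qed

end


context dec
begin

primrec ucs :: "('a \<Rightarrow> 'a) set \<Rightarrow> nat \<Rightarrow> nat \<Rightarrow> 'a set" where
  "ucs P i 0 = {\<one>\<^bsub>A\<^esub>}"
| "ucs P i (Suc k) = {x \<in> Ai i. \<forall>g\<in>P. g x \<otimes>\<^bsub>A\<^esub> inv\<^bsub>A\<^esub> x \<in> ucs P i k}"

lemma uc_sub:
  assumes sgP: "subgroup P G" and i: "i < r"
  shows "subgroup (ucs P i k) A \<and> ucs P i k \<subseteq> Ai i"
proof (induction k)
  case 0
  have "subgroup {\<one>\<^bsub>A\<^esub>} A" using group.triv_subgroup[OF A_group] .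
  moreover have "\<one>\<^bsub>A\<^esub> \<in> Ai i" using Ai_sub i subgroup.one_closed by blast
  ultimately show ?case by simp
next
  case (Suc k)
  interpret A: comm_group A by (rule A_comm)
  have Pa: "P \<subseteq> auto A" using sgP subgroup.subset G_carrier by blast
  have sgk: "subgroup (ucs P i k) A" using Suc by blast
  have sgAi: "subgroup (Ai i) A" using Ai_sub i by blast
  have Aic: "Ai i \<subseteq> carrier A" using Ai_carrier i .
  have "subgroup (ucs P i (Suc k)) A"
  proof (rule A.subgroupI)
    show "ucs P i (Suc k) \<subseteq> carrier A" using Aic by auto
    have P1: "\<forall>g\<in>P. g \<one>\<^bsub>A\<^esub> = \<one>\<^bsub>A\<^esub>" using Pa auto_one by blast
    have "\<one>\<^bsub>A\<^esub> \<in> ucs P i (Suc k)"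
      using subgroup.one_closed[OF sgAi] subgroup.one_closed[OF sgk] P1 by auto
    thus "ucs P i (Suc k) \<noteq> {}" by blast
  next
    fix x assume x: "x \<in> ucs P i (Suc k)"
    have xA: "x \<in> Ai i" and xc: "x \<in> carrier A" using x Aic by auto
    show "inv\<^bsub>A\<^esub> x \<in> ucs P i (Suc k)"
    proof (simp, intro conjI ballI)
      show "inv\<^bsub>A\<^esub> x \<in> Ai i" using subgroup.m_inv_closed[OF sgAi xA] .
      fix g assume g: "g \<in> P"
      have ga: "g \<in> auto A" using g Pa by blast
      have gxc: "g x \<in> carrier A" using auto_closed[OF ga xc] .
      have "g x \<otimes>\<^bsub>A\<^esub> inv\<^bsub>A\<^esub> x \<in> ucs P i k" using x g by simp
      hence "inv\<^bsub>A\<^esub> (g x \<otimes>\<^bsub>A\<^esub> inv\<^bsub>A\<^esub> x) \<in> ucs P i k" using subgroup.m_inv_closed[OF sgk] by blast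
      moreover have "inv\<^bsub>A\<^esub> (g x \<otimes>\<^bsub>A\<^esub> inv\<^bsub>A\<^esub> x) = g (inv\<^bsub>A\<^esub> x) \<otimes>\<^bsub>A\<^esub> inv\<^bsub>A\<^esub> (inv\<^bsub>A\<^esub> x)"
        using auto_inv[OF ga xc] gxc xc by (simp add: A.inv_mult A.m_comm)
      ultimately show "g (inv\<^bsub>A\<^esub> x) \<otimes>\<^bsub>A\<^esub> inv\<^bsub>A\<^esub> (inv\<^bsub>A\<^esub> x) \<in> ucs P i k" by simp
    qed
  next
    fix x y assume x: "x \<in> ucs P i (Suc k)" and y: "y \<in> ucs P i (Suc k)"
    have xA: "x \<in> Ai i" and xc: "x \<in> carrier A" using x Aic by auto
    have yA: "y \<in> Ai i" and yc: "y \<in> carrier A" using y Aic by auto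
    show "x \<otimes>\<^bsub>A\<^esub> y \<in> ucs P i (Suc k)"
    proof (simp, intro conjI ballI)
      show "x \<otimes>\<^bsub>A\<^esub> y \<in> Ai i" using subgroup.m_closed[OF sgAi xA yA] .
      fix g assume g: "g \<in> P"
      have ga: "g \<in> auto A" using g Pa by blast
      have gxc: "g x \<in> carrier A" and gyc: "g y \<in> carrier A" using auto_closed[OF ga] xc yc by auto
      have "g x \<otimes>\<^bsub>A\<^esub> inv\<^bsub>A\<^esub> x \<in> ucs P i k" "g y \<otimes>\<^bsub>A\<^esub> inv\<^bsub>A\<^esub> y \<in> ucs P i k" using x y g by simp_all
      hence "(g x \<otimes>\<^bsub>A\<^esub> inv\<^bsub>A\<^esub> x) \<otimes>\<^bsub>A\<^esub> (g y \<otimes>\<^bsub>A\<^esub> inv\<^bsub>A\<^esub> y) \<in> ucs P i k"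
        using subgroup.m_closed[OF sgk] by blast
      moreover have "(g x \<otimes>\<^bsub>A\<^esub> inv\<^bsub>A\<^esub> x) \<otimes>\<^bsub>A\<^esub> (g y \<otimes>\<^bsub>A\<^esub> inv\<^bsub>A\<^esub> y) = g (x \<otimes>\<^bsub>A\<^esub> y) \<otimes>\<^bsub>A\<^esub> inv\<^bsub>A\<^esub> (x \<otimes>\<^bsub>A\<^esub> y)"
        using auto_mult[OF ga xc yc] gxc gyc xc yc by (simp add: A.inv_mult A.m_ac)
      ultimately show "g (x \<otimes>\<^bsub>A\<^esub> y) \<otimes>\<^bsub>A\<^esub> inv\<^bsub>A\<^esub> (x \<otimes>\<^bsub>A\<^esub> y) \<in> ucs P i k" by simp
    qed
  qed
  moreover have "ucs P i (Suc k) \<subseteq> Ai i" by auto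
  ultimately show ?case by blast
qed

lemma uc_inv:
  assumes sgP: "subgroup P G" and i: "i < r"
  shows "\<And>g. g \<in> P \<Longrightarrow> g ` ucs P i k \<subseteq> ucs P i k"
proof (induction k)
  case 0
  have "g \<in> auto A" using sgP subgroup.subset G_carrier 0 by blast
  thus ?case using auto_one by simp
next
  case (Suc k)
  interpret A: comm_group A by (rule A_comm)
  have Pa: "P \<subseteq> auto A" using sgP subgroup.subset G_carrier by blast
  show ?case
  proof
    fix y assume "y \<in> g ` ucs P i (Suc k)"
    then obtain x where x: "x \<in> ucs P i (Suc k)" "y = g x" by blast
    have hP: "g \<in> P" by fact
    have ha: "g \<in> auto A" using hP Pa by blast
    have xA: "x \<in> Ai i" using x by simp
    have xc: "x \<in> carrier A" using xA Ai_carrier i by blast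
    have "g x \<in> Ai i" using auto_Ai[OF ha i xA] .
    moreover have "\<forall>f\<in>P. f (g x) \<otimes>\<^bsub>A\<^esub> inv\<^bsub>A\<^esub> (g x) \<in> ucs P i k"
    proof
      fix f assume fP: "f \<in> P"
      have fa: "f \<in> auto A" using fP Pa by blast
      let ?f' = "inv\<^bsub>G\<^esub> g \<otimes>\<^bsub>G\<^esub> f \<otimes>\<^bsub>G\<^esub> g"
      have f'P: "?f' \<in> P" using subgroup.m_closed[OF sgP] subgroup.m_inv_closed[OF sgP] hP fP by metis
      have f'a: "?f' \<in> auto A" using f'P Pa by blast
      have "?f' x \<otimes>\<^bsub>A\<^esub> inv\<^bsub>A\<^esub> x \<in> ucs P i k" using x f'P by simp
      hence "g (?f' x \<otimes>\<^bsub>A\<^esub> inv\<^bsub>A\<^esub> x) \<in> ucs P i k" using Suc.IH[OF hP] by blast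
      moreover have "g \<otimes>\<^bsub>G\<^esub> ?f' = f \<otimes>\<^bsub>G\<^esub> g"
      proof -
        have gG: "g \<in> carrier G" and fG: "f \<in> carrier G" using ha fa G_carrier by auto
        show ?thesis using gG fG by (simp add: GG.m_assoc[symmetric])
      qed
      hence "g (?f' x) = f (g x)"
        using G_mult[OF ha f'a xc] G_mult[OF fa ha xc] by metis
      moreover have "g (?f' x \<otimes>\<^bsub>A\<^esub> inv\<^bsub>A\<^esub> x) = g (?f' x) \<otimes>\<^bsub>A\<^esub> inv\<^bsub>A\<^esub> (g x)"
        using auto_mult[OF ha auto_closed[OF f'a xc]] auto_inv[OF ha xc] xc by simp
      ultimately show "f (g x) \<otimes>\<^bsub>A\<^esub> inv\<^bsub>A\<^esub> (g x) \<in> ucs P i k" by simp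
    qed
    ultimately show "y \<in> ucs P i (Suc k)" using x by simp
  qed
qed

lemma uc_mono:
  assumes sgP: "subgroup P G" and i: "i < r"
  shows "ucs P i k \<subseteq> ucs P i (Suc k)"
proof (induction k)
  case 0
  interpret A: comm_group A by (rule A_comm)
  have Pa: "P \<subseteq> auto A" using sgP subgroup.subset G_carrier by blast
  have P1: "\<forall>g\<in>P. g \<one>\<^bsub>A\<^esub> = \<one>\<^bsub>A\<^esub>" using Pa auto_one by blast
  have "\<one>\<^bsub>A\<^esub> \<in> Ai i" using Ai_sub i subgroup.one_closed by blast
  thus ?case using P1 by auto
next
  case (Suc k)
  show ?case
  proof
    fix x assume "x \<in> ucs P i (Suc k)"
    thus "x \<in> ucs P i (Suc (Suc k))" using Suc.IH by auto
  qed
qed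

lemma uc_grow:
  assumes sgP: "subgroup P G" and i: "i < r" and cP: "card P = p i ^ n"
    and ne: "ucs P i k \<noteq> Ai i"
  shows "card (ucs P i k) < card (ucs P i (Suc k))"
proof -
  have Pa: "P \<subseteq> auto A" using sgP subgroup.subset G_carrier by blast
  have s: "subgroup (ucs P i k) A" "ucs P i k \<subseteq> Ai i" using uc_sub[OF sgP i] by auto
  obtain x where x: "x \<in> Ai i - ucs P i k" "\<forall>g\<in>P. g x \<otimes>\<^bsub>A\<^esub> inv\<^bsub>A\<^esub> x \<in> ucs P i k"
    using FP[OF sgP Pa cP i s(1) s(2) ne uc_inv[OF sgP i]] by blast
  have "x \<in> ucs P i (Suc k)" using x by simp
  moreover have fin: "finite (ucs P i (Suc k))" using uc_sub[OF sgP i, of "Suc k"] Ai_fin[OF i] finite_subset by blast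
  ultimately show ?thesis using uc_mono[OF sgP i, of k] x psubset_card_mono[OF fin] by blast
qed

lemma uc_reach:
  assumes sgP: "subgroup P G" and i: "i < r" and cP: "card P = p i ^ n"
    and k: "k \<ge> Suc (card (Ai i))"
  shows "ucs P i k = Ai i"
proof -
  have finAi: "finite (Ai i)" using Ai_fin i .
  have cl: "\<And>k. card (ucs P i k) \<le> card (Ai i)"
    using uc_sub[OF sgP i] card_mono[OF finAi] by blast
  have stay: "\<And>j k. ucs P i j = Ai i \<Longrightarrow> j \<le> k \<Longrightarrow> ucs P i k = Ai i"
  proof -
    fix j k assume e: "ucs P i j = Ai i" and jk: "j \<le> k"
    have "ucs P i j \<subseteq> ucs P i k" using jk
    proof (induction k)
      case 0 thus ?case by simp
    next
      case (Suc k)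
      show ?case
      proof (cases "j = Suc k")
        case True thus ?thesis by simp
      next
        case False
        hence "ucs P i j \<subseteq> ucs P i k" using Suc by simp
        thus ?thesis using uc_mono[OF sgP i, of k] by blast
      qed
    qed
    thus "ucs P i k = Ai i" using e uc_sub[OF sgP i, of k] by blast
  qed
  have claim: "\<And>k. (\<exists>j\<le>k. ucs P i j = Ai i) \<or> k \<le> card (ucs P i k)"
  proof -
    fix k show "(\<exists>j\<le>k. ucs P i j = Ai i) \<or> k \<le> card (ucs P i k)"
    proof (induction k)
      case 0 thus ?case by simp
    next
      case (Suc k)
      show ?case
      proof (cases "ucs P i k = Ai i")
        case True thus ?thesis by (meson le_SucI order_refl)
      next
        case False
        hence "card (ucs P i k) < card (ucs P i (Suc k))" using uc_grow[OF sgP i cP] by blast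
        thus ?thesis using Suc.IH by (meson Suc_leI le_SucI order_trans le_less_trans)
      qed
    qed
  qed
  have "\<not> k \<le> card (ucs P i k)" using cl[of k] k by linarith
  then obtain j where "j \<le> k" "ucs P i j = Ai i" using claim[of k] by blast
  thus ?thesis using stay by blast
qed

end


context dec
begin

lemma M2:
  assumes sgP: "\<And>j. j < r \<Longrightarrow> subgroup (Pf j) G"
    and PGL: "\<And>j. j < r \<Longrightarrow> Pf j \<subseteq> GL_factor A Ai r j"
    and cP: "\<And>j. j < r \<Longrightarrow> \<exists>n. card (Pf j) = p j ^ n"
  shows "centralizes_series A (generate G (\<Union>j<r. Pf j))"
proof -
  interpret A: comm_group A by (rule A_comm)
  define D where "D = (\<lambda>k. (\<lambda>f. finprod A f {..<r}) ` (\<Pi>\<^sub>E j\<in>{..<r}. ucs (Pf j) j k))"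
  define L where "L = Suc (card (carrier A))"
  have ucA: "\<And>j k. j < r \<Longrightarrow> ucs (Pf j) j k \<subseteq> Ai j" using uc_sub sgP by blast
  have ucsg: "\<And>j k. j < r \<Longrightarrow> subgroup (ucs (Pf j) j k) A" using uc_sub sgP by blast
  have ucc: "\<And>j k. j < r \<Longrightarrow> ucs (Pf j) j k \<subseteq> carrier A" using ucA Ai_carrier by blast
  have fc: "\<And>f k. f \<in> (\<Pi>\<^sub>E j\<in>{..<r}. ucs (Pf j) j k) \<Longrightarrow> f \<in> {..<r} \<rightarrow> carrier A"
    using ucc by (auto simp: PiE_def Pi_def)
  have Pa: "\<And>j g. j < r \<Longrightarrow> g \<in> Pf j \<Longrightarrow> g \<in> auto A" using PGL GL_sub_auto by blast
  have d_sub: "\<And>k. subgroup (D k) A"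
  proof -
    fix k
    show "subgroup (D k) A"
    proof (rule A.subgroupI)
      show "D k \<subseteq> carrier A" unfolding D_def using fc by auto
      have "(\<lambda>j\<in>{..<r}. \<one>\<^bsub>A\<^esub>) \<in> (\<Pi>\<^sub>E j\<in>{..<r}. ucs (Pf j) j k)"
        by (rule PiE_I) (auto intro: subgroup.one_closed[OF ucsg])
      thus "D k \<noteq> {}" unfolding D_def by blast
    next
      fix x assume "x \<in> D k"
      then obtain f where f: "f \<in> (\<Pi>\<^sub>E j\<in>{..<r}. ucs (Pf j) j k)" "x = finprod A f {..<r}" unfolding D_def by blast
      have "inv\<^bsub>A\<^esub> x = finprod A (\<lambda>j. inv\<^bsub>A\<^esub> (f j)) {..<r}"
        using hom_finprod_comm[OF A_comm inv_hom_comm[OF A_comm] _ fc[OF f(1)]] f(2) by simp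
      also have "\<dots> = finprod A (\<lambda>j\<in>{..<r}. inv\<^bsub>A\<^esub> (f j)) {..<r}"
        by (rule A.finprod_cong') (use fc[OF f(1)] in auto)
      finally have e: "inv\<^bsub>A\<^esub> x = finprod A (\<lambda>j\<in>{..<r}. inv\<^bsub>A\<^esub> (f j)) {..<r}" .
      have "(\<lambda>j\<in>{..<r}. inv\<^bsub>A\<^esub> (f j)) \<in> (\<Pi>\<^sub>E j\<in>{..<r}. ucs (Pf j) j k)"
      proof (rule PiE_I)
        fix j assume j: "j \<in> {..<r}"
        have "f j \<in> ucs (Pf j) j k" using f(1) j by blast
        thus "(\<lambda>j\<in>{..<r}. inv\<^bsub>A\<^esub> (f j)) j \<in> ucs (Pf j) j k"
          using subgroup.m_inv_closed[OF ucsg] j by simp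
      qed simp
      thus "inv\<^bsub>A\<^esub> x \<in> D k" unfolding D_def e by blast
    next
      fix x y assume "x \<in> D k" "y \<in> D k"
      then obtain f g where f: "f \<in> (\<Pi>\<^sub>E j\<in>{..<r}. ucs (Pf j) j k)" "x = finprod A f {..<r}"
        and g: "g \<in> (\<Pi>\<^sub>E j\<in>{..<r}. ucs (Pf j) j k)" "y = finprod A g {..<r}" unfolding D_def by blast
      have "x \<otimes>\<^bsub>A\<^esub> y = finprod A (\<lambda>j. f j \<otimes>\<^bsub>A\<^esub> g j) {..<r}"
        using A.finprod_multf[OF fc[OF f(1)] fc[OF g(1)]] f g by simp
      also have "\<dots> = finprod A (\<lambda>j\<in>{..<r}. f j \<otimes>\<^bsub>A\<^esub> g j) {..<r}"
        by (rule A.finprod_cong') (use fc[OF f(1)] fc[OF g(1)] in auto)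
      finally have e: "x \<otimes>\<^bsub>A\<^esub> y = finprod A (\<lambda>j\<in>{..<r}. f j \<otimes>\<^bsub>A\<^esub> g j) {..<r}" .
      have "(\<lambda>j\<in>{..<r}. f j \<otimes>\<^bsub>A\<^esub> g j) \<in> (\<Pi>\<^sub>E j\<in>{..<r}. ucs (Pf j) j k)"
      proof (rule PiE_I)
        fix j assume j: "j \<in> {..<r}"
        have "f j \<in> ucs (Pf j) j k" "g j \<in> ucs (Pf j) j k" using f(1) g(1) j by blast+
        thus "(\<lambda>j\<in>{..<r}. f j \<otimes>\<^bsub>A\<^esub> g j) j \<in> ucs (Pf j) j k"
          using subgroup.m_closed[OF ucsg] j by simp
      qed simp
      thus "x \<otimes>\<^bsub>A\<^esub> y \<in> D k" unfolding D_def e by blast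
    qed
  qed
  have d0: "D 0 = {\<one>\<^bsub>A\<^esub>}"
  proof
    show "D 0 \<subseteq> {\<one>\<^bsub>A\<^esub>}"
    proof
      fix x assume "x \<in> D 0"
      then obtain f where f: "f \<in> (\<Pi>\<^sub>E j\<in>{..<r}. ucs (Pf j) j 0)" "x = finprod A f {..<r}" unfolding D_def by blast
      have "x = finprod A (\<lambda>j. \<one>\<^bsub>A\<^esub>) {..<r}"
        unfolding f(2) by (rule A.finprod_cong') (use f(1) in auto)
      thus "x \<in> {\<one>\<^bsub>A\<^esub>}" by simp
    qed
    have r1: "(\<lambda>j\<in>{..<r}. \<one>\<^bsub>A\<^esub>) \<in> (\<Pi>\<^sub>E j\<in>{..<r}. ucs (Pf j) j 0)" by auto
    have r2: "finprod A (\<lambda>j\<in>{..<r}. \<one>\<^bsub>A\<^esub>) {..<r} = \<one>\<^bsub>A\<^esub>"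
    proof -
      have "finprod A (\<lambda>j\<in>{..<r}. \<one>\<^bsub>A\<^esub>) {..<r} = finprod A (\<lambda>j. \<one>\<^bsub>A\<^esub>) {..<r}"
        by (rule A.finprod_cong') auto
      thus ?thesis by simp
    qed
    have "\<one>\<^bsub>A\<^esub> \<in> D 0" unfolding D_def
      using image_eqI[where f="\<lambda>f. finprod A f {..<r}", OF r2[symmetric] r1] .
    thus "{\<one>\<^bsub>A\<^esub>} \<subseteq> D 0" by simp
  qed
  have dL: "D L = carrier A"
  proof -
    have "\<And>j. j < r \<Longrightarrow> ucs (Pf j) j L = Ai j"
    proof -
      fix j assume j: "j < r"
      obtain n where n: "card (Pf j) = p j ^ n" using cP j by blast
      have "card (Ai j) \<le> card (carrier A)" using card_mono[OF finA Ai_carrier[OF j]] .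
      hence "L \<ge> Suc (card (Ai j))" unfolding L_def by simp
      thus "ucs (Pf j) j L = Ai j" using uc_reach[OF sgP[OF j] j n] by blast
    qed
    hence "(\<Pi>\<^sub>E j\<in>{..<r}. ucs (Pf j) j L) = (\<Pi>\<^sub>E j\<in>{..<r}. Ai j)" by (intro PiE_cong) auto
    thus ?thesis unfolding D_def using bij_betw_imp_surj_on[OF dirprod] by simp
  qed
  have dmono: "\<And>k. D k \<subseteq> D (Suc k)"
  proof -
    fix k
    have "(\<Pi>\<^sub>E j\<in>{..<r}. ucs (Pf j) j k) \<subseteq> (\<Pi>\<^sub>E j\<in>{..<r}. ucs (Pf j) j (Suc k))"
      by (rule PiE_mono) (use uc_mono sgP in blast)
    thus "D k \<subseteq> D (Suc k)" unfolding D_def by blast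
  qed
  have dinv: "\<And>i g k x. i < r \<Longrightarrow> g \<in> Pf i \<Longrightarrow> x \<in> D k \<Longrightarrow> g x \<in> D k"
  proof -
    fix i g k x assume i: "i < r" and g: "g \<in> Pf i" and x: "x \<in> D k"
    have ga: "g \<in> auto A" using Pa[OF i g] .
    obtain f where f: "f \<in> (\<Pi>\<^sub>E j\<in>{..<r}. ucs (Pf j) j k)" "x = finprod A f {..<r}" using x unfolding D_def by blast
    have "g x = finprod A (\<lambda>j. g (f j)) {..<r}"
      using hom_finprod_comm[OF A_comm auto_hom[OF ga] _ fc[OF f(1)]] f(2) by simp
    also have "\<dots> = finprod A (\<lambda>j\<in>{..<r}. g (f j)) {..<r}"
      by (rule A.finprod_cong') (use fc[OF f(1)] auto_closed[OF ga] in auto)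
    finally have e: "g x = finprod A (\<lambda>j\<in>{..<r}. g (f j)) {..<r}" .
    have "(\<lambda>j\<in>{..<r}. g (f j)) \<in> (\<Pi>\<^sub>E j\<in>{..<r}. ucs (Pf j) j k)"
    proof (rule PiE_I)
      fix j assume j: "j \<in> {..<r}"
      have fj: "f j \<in> ucs (Pf j) j k" using f(1) j by blast
      show "(\<lambda>j\<in>{..<r}. g (f j)) j \<in> ucs (Pf j) j k"
      proof (cases "j = i")
        case True thus ?thesis using uc_inv[OF sgP[OF i] i g] fj j by auto
      next
        case False
        have "f j \<in> Ai j" using ucA j fj by blast
        hence "g (f j) = f j" using PGL[OF i] g False j unfolding GL_factor_def by blast
        thus ?thesis using fj j by simp
      qed
    qed simp
    thus "g x \<in> D k" unfolding D_def e by blast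
  qed
  have dcom: "\<And>i g k x. i < r \<Longrightarrow> g \<in> Pf i \<Longrightarrow> x \<in> D (Suc k) \<Longrightarrow> g x \<otimes>\<^bsub>A\<^esub> inv\<^bsub>A\<^esub> x \<in> D k"
  proof -
    fix i g k x assume i: "i < r" and g: "g \<in> Pf i" and x: "x \<in> D (Suc k)"
    have ga: "g \<in> auto A" using Pa[OF i g] .
    obtain f where f: "f \<in> (\<Pi>\<^sub>E j\<in>{..<r}. ucs (Pf j) j (Suc k))" "x = finprod A f {..<r}" using x unfolding D_def by blast
    have fcc: "f \<in> {..<r} \<rightarrow> carrier A" using fc[OF f(1)] .
    have gfc: "(\<lambda>j. g (f j)) \<in> {..<r} \<rightarrow> carrier A" using fcc auto_closed[OF ga] by auto
    have ifc: "(\<lambda>j. inv\<^bsub>A\<^esub> (f j)) \<in> {..<r} \<rightarrow> carrier A" using fcc by auto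
    have "g x = finprod A (\<lambda>j. g (f j)) {..<r}"
      using hom_finprod_comm[OF A_comm auto_hom[OF ga] _ fcc] f(2) by simp
    moreover have "inv\<^bsub>A\<^esub> x = finprod A (\<lambda>j. inv\<^bsub>A\<^esub> (f j)) {..<r}"
      using hom_finprod_comm[OF A_comm inv_hom_comm[OF A_comm] _ fcc] f(2) by simp
    ultimately have "g x \<otimes>\<^bsub>A\<^esub> inv\<^bsub>A\<^esub> x = finprod A (\<lambda>j. g (f j) \<otimes>\<^bsub>A\<^esub> inv\<^bsub>A\<^esub> (f j)) {..<r}"
      using A.finprod_multf[OF gfc ifc] by simp
    also have "\<dots> = finprod A (\<lambda>j\<in>{..<r}. g (f j) \<otimes>\<^bsub>A\<^esub> inv\<^bsub>A\<^esub> (f j)) {..<r}"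
      by (rule A.finprod_cong') (use gfc ifc in auto)
    finally have e: "g x \<otimes>\<^bsub>A\<^esub> inv\<^bsub>A\<^esub> x = finprod A (\<lambda>j\<in>{..<r}. g (f j) \<otimes>\<^bsub>A\<^esub> inv\<^bsub>A\<^esub> (f j)) {..<r}" .
    have "(\<lambda>j\<in>{..<r}. g (f j) \<otimes>\<^bsub>A\<^esub> inv\<^bsub>A\<^esub> (f j)) \<in> (\<Pi>\<^sub>E j\<in>{..<r}. ucs (Pf j) j k)"
    proof (rule PiE_I)
      fix j assume j: "j \<in> {..<r}"
      have fj: "f j \<in> ucs (Pf j) j (Suc k)" using f(1) j by blast
      show "(\<lambda>j\<in>{..<r}. g (f j) \<otimes>\<^bsub>A\<^esub> inv\<^bsub>A\<^esub> (f j)) j \<in> ucs (Pf j) j k"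
      proof (cases "j = i")
        case True thus ?thesis using fj g j by auto
      next
        case False
        have fjA: "f j \<in> Ai j" using fj by simp
        hence "g (f j) = f j" using PGL[OF i] g False j unfolding GL_factor_def by blast
        moreover have "f j \<in> carrier A" using fjA Ai_carrier j by blast
        ultimately have "g (f j) \<otimes>\<^bsub>A\<^esub> inv\<^bsub>A\<^esub> (f j) = \<one>\<^bsub>A\<^esub>" by simp
        thus ?thesis using j subgroup.one_closed[OF ucsg] by simp
      qed
    qed simp
    thus "g x \<otimes>\<^bsub>A\<^esub> inv\<^bsub>A\<^esub> x \<in> D k" unfolding D_def e by blast
  qed
  define S where "S = (\<lambda>j. D (L - j))"
  have Ssg: "\<And>j. j \<le> L \<Longrightarrow> subgroup (S j) A" unfolding S_def using d_sub by blast
  have PS: "(\<Union>j<r. Pf j) \<subseteq> stabset L S"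
  proof
    fix g assume "g \<in> (\<Union>j<r. Pf j)"
    then obtain i where i: "i < r" and g: "g \<in> Pf i" by blast
    show "g \<in> stabset L S" unfolding stabset_def
    proof (intro CollectI conjI allI impI ballI)
      show "g \<in> auto A" using Pa[OF i g] .
      fix j assume "j \<le> L"
      show "g ` S j \<subseteq> S j" unfolding S_def using dinv[OF i g] by blast
    next
      fix j x assume j: "j < L" and x: "x \<in> S j"
      have "x \<in> D (Suc (L - Suc j))" using x j unfolding S_def by (simp add: Suc_diff_Suc)
      thus "g x \<otimes>\<^bsub>A\<^esub> inv\<^bsub>A\<^esub> x \<in> S (Suc j)" unfolding S_def using dcom[OF i g] by blast
    qed
  qed
  have genS: "generate G (\<Union>j<r. Pf j) \<subseteq> stabset L S"
    using GG.generate_subgroup_incl[OF PS stab_subgroup[OF Ssg]] .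
  have "wseries A (generate G (\<Union>j<r. Pf j)) L S"
    unfolding wseries_def
  proof (intro conjI allI impI ballI)
    show "S 0 = carrier A" unfolding S_def using dL by simp
    show "S L = {\<one>\<^bsub>A\<^esub>}" unfolding S_def using d0 by simp
    fix j
    show "j \<le> L \<Longrightarrow> subgroup (S j) A" using Ssg by blast
    show "j < L \<Longrightarrow> S (Suc j) \<subseteq> S j"
    proof -
      assume j: "j < L"
      hence "L - j = Suc (L - Suc j)" by simp
      thus ?thesis unfolding S_def using dmono[of "L - Suc j"] by simp
    qed
  next
    fix n j assume n: "n \<in> generate G (\<Union>j<r. Pf j)" and j: "j \<le> L"
    show "n ` S j \<subseteq> S j" using genS n j unfolding stabset_def by blast
  next
    fix n j x assume n: "n \<in> generate G (\<Union>j<r. Pf j)" and j: "j < L" and x: "x \<in> S j"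
    show "n x \<otimes>\<^bsub>A\<^esub> inv\<^bsub>A\<^esub> x \<in> S (Suc j)" using genS n j x unfolding stabset_def by blast
  qed
  thus ?thesis by (rule wseries_centralizes)
qed

end


context dec
begin

lemma Gc1: "y \<in> carrier G \<Longrightarrow> z \<in> carrier G \<Longrightarrow> inv\<^bsub>G\<^esub> y \<otimes>\<^bsub>G\<^esub> (y \<otimes>\<^bsub>G\<^esub> z) = z"
  by (simp add: GG.m_assoc[symmetric])

lemma Gc2: "y \<in> carrier G \<Longrightarrow> z \<in> carrier G \<Longrightarrow> y \<otimes>\<^bsub>G\<^esub> (inv\<^bsub>G\<^esub> y \<otimes>\<^bsub>G\<^esub> z) = z"
  by (simp add: GG.m_assoc[symmetric])

lemma sig_facts:
  assumes U_sub: "subgroup U G" and i: "i < r"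
  shows "subgroup (sigma A Ai r U i) G"
    and "group (G\<lparr>carrier := sigma A Ai r U i\<rparr>)"
    and "finite (carrier (G\<lparr>carrier := sigma A Ai r U i\<rparr>))"
    and "normal (O_p (G\<lparr>carrier := sigma A Ai r U i\<rparr>) (p i)) (G\<lparr>carrier := sigma A Ai r U i\<rparr>)"
    and "\<exists>k. card (O_p (G\<lparr>carrier := sigma A Ai r U i\<rparr>) (p i)) = p i ^ k"
    and "O_p (G\<lparr>carrier := sigma A Ai r U i\<rparr>) (p i) \<subseteq> sigma A Ai r U i"
    and "subgroup (O_p (G\<lparr>carrier := sigma A Ai r U i\<rparr>) (p i)) G"
proof -
  show sgs: "subgroup (sigma A Ai r U i) G" unfolding sigma_def using GG.subgroups_Inter_pair[OF U_sub GL_subgroup] .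
  show gs: "group (G\<lparr>carrier := sigma A Ai r U i\<rparr>)" using GG.subgroup_imp_group[OF sgs] .
  show fins: "finite (carrier (G\<lparr>carrier := sigma A Ai r U i\<rparr>))" using finG sgs subgroup.subset finite_subset by fastforce
  have pr: "Factorial_Ring.prime (p i)" using primes i by blast
  show nO: "normal (O_p (G\<lparr>carrier := sigma A Ai r U i\<rparr>) (p i)) (G\<lparr>carrier := sigma A Ai r U i\<rparr>)"
    using Op_props(1)[OF gs fins pr] .
  show "\<exists>k. card (O_p (G\<lparr>carrier := sigma A Ai r U i\<rparr>) (p i)) = p i ^ k" using Op_props(2)[OF gs fins pr] .
  show "O_p (G\<lparr>carrier := sigma A Ai r U i\<rparr>) (p i) \<subseteq> sigma A Ai r U i"
    using subgroup.subset[OF normal_imp_subgroup[OF nO]] by simp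
  show "subgroup (O_p (G\<lparr>carrier := sigma A Ai r U i\<rparr>) (p i)) G"
    using GG.incl_subgroup[OF sgs normal_imp_subgroup[OF nO]] .
qed

lemma conjO:
  assumes U_sub: "subgroup U G" and i: "i < r" and u: "u \<in> U"
    and g: "g \<in> O_p (G\<lparr>carrier := sigma A Ai r U i\<rparr>) (p i)"
  shows "u \<otimes>\<^bsub>G\<^esub> g \<otimes>\<^bsub>G\<^esub> inv\<^bsub>G\<^esub> u \<in> O_p (G\<lparr>carrier := sigma A Ai r U i\<rparr>) (p i)"
proof -
  let ?s = "sigma A Ai r U i"
  let ?Gs = "G\<lparr>carrier := ?s\<rparr>"
  let ?O = "O_p ?Gs (p i)"
  note F = sig_facts[OF U_sub i]
  have uG: "u \<in> carrier G" using u U_sub subgroup.subset by blast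
  have ua: "u \<in> auto A" using uG G_carrier by simp
  have Os: "?O \<subseteq> ?s" using F(6) .
  have OG: "?O \<subseteq> carrier G" using F(7) subgroup.subset by blast
  define c where "c = (\<lambda>x. u \<otimes>\<^bsub>G\<^esub> x \<otimes>\<^bsub>G\<^esub> inv\<^bsub>G\<^esub> u)"
  let ?O' = "c ` ?O"
  have injc: "inj_on c (carrier G)"
  proof (rule inj_onI)
    fix x y assume "x \<in> carrier G" "y \<in> carrier G" "c x = c y"
    thus "x = y" unfolding c_def using uG by simp
  qed
  have cO': "card ?O' = card ?O" using card_image[OF inj_on_subset[OF injc OG]] .
  have sU: "\<And>x. x \<in> ?s \<Longrightarrow> x \<in> U" and sGL: "\<And>x. x \<in> ?s \<Longrightarrow> x \<in> GL_factor A Ai r i"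
    unfolding sigma_def by auto
  have cs: "\<And>x. x \<in> ?s \<Longrightarrow> c x \<in> ?s"
  proof -
    fix x assume x: "x \<in> ?s"
    have "c x \<in> U" unfolding c_def
      using subgroup.m_closed[OF U_sub] subgroup.m_inv_closed[OF U_sub] u sU[OF x] by metis
    moreover have "c x \<in> GL_factor A Ai r i" unfolding c_def using GL_conj[OF ua sGL[OF x]] .
    ultimately show "c x \<in> ?s" unfolding sigma_def by blast
  qed
  have sgO': "subgroup ?O' G"
  proof (rule GG.subgroupI)
    show "?O' \<subseteq> carrier G" using OG uG unfolding c_def by auto
    show "?O' \<noteq> {}" using subgroup.one_closed[OF F(7)] by blast
  next
    fix y assume "y \<in> ?O'"
    then obtain x where x: "x \<in> ?O" "y = c x" by blast
    have xG: "x \<in> carrier G" using x OG by blast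
    have "inv\<^bsub>G\<^esub> y = c (inv\<^bsub>G\<^esub> x)" unfolding x c_def using xG uG
      by (simp add: GG.inv_mult_group GG.m_assoc Gc1 Gc2)
    moreover have "inv\<^bsub>G\<^esub> x \<in> ?O" using subgroup.m_inv_closed[OF F(7) x(1)] .
    ultimately show "inv\<^bsub>G\<^esub> y \<in> ?O'" by blast
  next
    fix y z assume "y \<in> ?O'" "z \<in> ?O'"
    then obtain x w where x: "x \<in> ?O" "y = c x" and w: "w \<in> ?O" "z = c w" by blast
    have xG: "x \<in> carrier G" and wG: "w \<in> carrier G" using x w OG by auto
    have "y \<otimes>\<^bsub>G\<^esub> z = c (x \<otimes>\<^bsub>G\<^esub> w)" unfolding x w c_def using xG wG uG
      by (simp add: GG.m_assoc Gc1 Gc2)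
    moreover have "x \<otimes>\<^bsub>G\<^esub> w \<in> ?O" using subgroup.m_closed[OF F(7) x(1) w(1)] .
    ultimately show "y \<otimes>\<^bsub>G\<^esub> z \<in> ?O'" by blast
  qed
  have O's: "?O' \<subseteq> ?s" using cs Os by blast
  have sgO's: "subgroup ?O' ?Gs" using GG.subgroup_incl[OF sgO' F(1) O's] .
  have nO': "normal ?O' ?Gs"
  proof -
    have "\<forall>s\<in>carrier ?Gs. \<forall>y\<in>?O'. s \<otimes>\<^bsub>?Gs\<^esub> y \<otimes>\<^bsub>?Gs\<^esub> inv\<^bsub>?Gs\<^esub> s \<in> ?O'"
    proof (intro ballI)
      fix s y assume s: "s \<in> carrier ?Gs" and y: "y \<in> ?O'"
      have ss: "s \<in> ?s" using s by simp
      have sG: "s \<in> carrier G" using ss F(1) subgroup.subset by blast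
      obtain x where x: "x \<in> ?O" "y = c x" using y by blast
      have xG: "x \<in> carrier G" using x OG by blast
      have invs: "inv\<^bsub>?Gs\<^esub> s = inv\<^bsub>G\<^esub> s" using GG.m_inv_consistent[OF F(1) ss] .
      define s' where "s' = inv\<^bsub>G\<^esub> u \<otimes>\<^bsub>G\<^esub> s \<otimes>\<^bsub>G\<^esub> inv\<^bsub>G\<^esub> (inv\<^bsub>G\<^esub> u)"
      have s'G: "s' \<in> carrier G" unfolding s'_def using sG uG by simp
      have s's: "s' \<in> ?s"
      proof -
        have iu: "inv\<^bsub>G\<^esub> u \<in> U" using subgroup.m_inv_closed[OF U_sub u] .
        have "s' \<in> U" unfolding s'_def
          using subgroup.m_closed[OF U_sub] subgroup.m_inv_closed[OF U_sub] iu sU[OF ss] by metis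
        moreover have "s' \<in> GL_factor A Ai r i" unfolding s'_def
          using GL_conj[OF G_inv_closed[OF ua] sGL[OF ss]] .
        ultimately show ?thesis unfolding sigma_def by blast
      qed
      have "s' \<otimes>\<^bsub>?Gs\<^esub> x \<otimes>\<^bsub>?Gs\<^esub> inv\<^bsub>?Gs\<^esub> s' \<in> ?O"
        using group.normal_inv_iff[OF F(2)] F(4) s's x(1) by auto
      hence "s' \<otimes>\<^bsub>G\<^esub> x \<otimes>\<^bsub>G\<^esub> inv\<^bsub>G\<^esub> s' \<in> ?O"
        using GG.m_inv_consistent[OF F(1) s's] by simp
      moreover have "c (s' \<otimes>\<^bsub>G\<^esub> x \<otimes>\<^bsub>G\<^esub> inv\<^bsub>G\<^esub> s') = s \<otimes>\<^bsub>G\<^esub> y \<otimes>\<^bsub>G\<^esub> inv\<^bsub>G\<^esub> s"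
        unfolding c_def s'_def x(2) using sG uG xG
        by (simp add: GG.m_assoc GG.inv_mult_group Gc1 Gc2)
      ultimately show "s \<otimes>\<^bsub>?Gs\<^esub> y \<otimes>\<^bsub>?Gs\<^esub> inv\<^bsub>?Gs\<^esub> s \<in> ?O'" using invs by (simp, metis image_eqI)
    qed
    thus ?thesis using group.normal_inv_iff[OF F(2)] sgO's by blast
  qed
  obtain k where ck: "card ?O = p i ^ k" using F(5) by blast
  have "?O' \<subseteq> ?O" using Op_props(3)[OF F(2) F(3) _ nO'] primes i cO' ck by metis
  moreover have "c g \<in> ?O'" using g by blast
  ultimately show ?thesis unfolding c_def by blast
qed

lemma M1:
  assumes U_sub: "subgroup U G"
  shows "normal (O_U A Ai p r U) (G\<lparr>carrier := U\<rparr>)"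
proof -
  let ?Oi = "\<lambda>i. O_p (G\<lparr>carrier := sigma A Ai r U i\<rparr>) (p i)"
  let ?X = "\<Union>i<r. ?Oi i"
  have XU: "?X \<subseteq> U"
  proof
    fix x assume "x \<in> ?X"
    then obtain i where "i < r" "x \<in> ?Oi i" by blast
    thus "x \<in> U" using sig_facts(6)[OF U_sub] unfolding sigma_def by blast
  qed
  have UG: "U \<subseteq> carrier G" using U_sub subgroup.subset by blast
  have XG: "?X \<subseteq> carrier G" using XU UG by blast
  have sgen: "subgroup (generate G ?X) G" using GG.generate_is_subgroup[OF XG] .
  have genU: "generate G ?X \<subseteq> U" using GG.generate_subgroup_incl[OF XU U_sub] .
  have gU: "group (G\<lparr>carrier := U\<rparr>)" using GG.subgroup_imp_group[OF U_sub] .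
  have sgU: "subgroup (generate G ?X) (G\<lparr>carrier := U\<rparr>)" using GG.subgroup_incl[OF sgen U_sub genU] .
  have conj: "\<And>u h. u \<in> U \<Longrightarrow> h \<in> generate G ?X \<Longrightarrow> u \<otimes>\<^bsub>G\<^esub> h \<otimes>\<^bsub>G\<^esub> inv\<^bsub>G\<^esub> u \<in> generate G ?X"
  proof -
    fix u h assume u: "u \<in> U" and h: "h \<in> generate G ?X"
    have uG: "u \<in> carrier G" using u UG by blast
    from h show "u \<otimes>\<^bsub>G\<^esub> h \<otimes>\<^bsub>G\<^esub> inv\<^bsub>G\<^esub> u \<in> generate G ?X"
    proof (induction rule: generate.induct)
      case one thus ?case using uG generate.one by simp
    next
      case (incl h)
      then obtain i where i: "i < r" "h \<in> ?Oi i" by blast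
      hence "u \<otimes>\<^bsub>G\<^esub> h \<otimes>\<^bsub>G\<^esub> inv\<^bsub>G\<^esub> u \<in> ?Oi i" using conjO[OF U_sub i(1) u] by blast
      thus ?case using i by (intro generate.incl) blast
    next
      case (inv h)
      then obtain i where i: "i < r" "h \<in> ?Oi i" by blast
      have hG: "h \<in> carrier G" using i XG by blast
      have "u \<otimes>\<^bsub>G\<^esub> h \<otimes>\<^bsub>G\<^esub> inv\<^bsub>G\<^esub> u \<in> ?Oi i" using conjO[OF U_sub i(1) u] i by blast
      hence "inv\<^bsub>G\<^esub> (u \<otimes>\<^bsub>G\<^esub> h \<otimes>\<^bsub>G\<^esub> inv\<^bsub>G\<^esub> u) \<in> ?Oi i"
        using subgroup.m_inv_closed[OF sig_facts(7)[OF U_sub i(1)]] by blast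
      moreover have "inv\<^bsub>G\<^esub> (u \<otimes>\<^bsub>G\<^esub> h \<otimes>\<^bsub>G\<^esub> inv\<^bsub>G\<^esub> u) = u \<otimes>\<^bsub>G\<^esub> inv\<^bsub>G\<^esub> h \<otimes>\<^bsub>G\<^esub> inv\<^bsub>G\<^esub> u"
        using uG hG by (simp add: GG.inv_mult_group GG.m_assoc Gc1 Gc2)
      ultimately show ?case using i by (metis (no_types, lifting) UN_I generate.incl lessThan_iff)
    next
      case (eng h1 h2)
      have h1G: "h1 \<in> carrier G" and h2G: "h2 \<in> carrier G"
        using eng.hyps GG.generate_in_carrier[OF XG] by blast+
      have "u \<otimes>\<^bsub>G\<^esub> (h1 \<otimes>\<^bsub>G\<^esub> h2) \<otimes>\<^bsub>G\<^esub> inv\<^bsub>G\<^esub> u =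
            (u \<otimes>\<^bsub>G\<^esub> h1 \<otimes>\<^bsub>G\<^esub> inv\<^bsub>G\<^esub> u) \<otimes>\<^bsub>G\<^esub> (u \<otimes>\<^bsub>G\<^esub> h2 \<otimes>\<^bsub>G\<^esub> inv\<^bsub>G\<^esub> u)"
        using uG h1G h2G by (simp add: GG.m_assoc Gc1 Gc2)
      moreover have "(u \<otimes>\<^bsub>G\<^esub> h1 \<otimes>\<^bsub>G\<^esub> inv\<^bsub>G\<^esub> u) \<otimes>\<^bsub>G\<^esub> (u \<otimes>\<^bsub>G\<^esub> h2 \<otimes>\<^bsub>G\<^esub> inv\<^bsub>G\<^esub> u) \<in> generate G ?X"
        by (rule generate.eng[OF eng.IH])
      ultimately show ?case by simp
    qed
  qed
  have "\<forall>u\<in>carrier (G\<lparr>carrier := U\<rparr>). \<forall>h\<in>generate G ?X.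
          u \<otimes>\<^bsub>G\<lparr>carrier := U\<rparr>\<^esub> h \<otimes>\<^bsub>G\<lparr>carrier := U\<rparr>\<^esub> inv\<^bsub>G\<lparr>carrier := U\<rparr>\<^esub> u \<in> generate G ?X"
    using conj GG.m_inv_consistent[OF U_sub] by simp
  hence "normal (generate G ?X) (G\<lparr>carrier := U\<rparr>)" using group.normal_inv_iff[OF gU] sgU by blast
  thus ?thesis unfolding O_U_def .
qed

end

theorem lemma3p3:
  fixes A :: "('a, 'b) monoid_scheme"
    and Ai :: "nat \<Rightarrow> 'a set"
    and p d :: "nat \<Rightarrow> nat"
    and r :: nat
    and U :: "('a \<Rightarrow> 'a) set"
  assumes A_comm: "comm_group A"
    and primes: "\<forall>i<r. Factorial_Ring.prime (p i)"
    and distinct: "inj_on p {..<r}"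
    and d_pos: "\<forall>i<r. d i \<ge> 1"
    and Ai_sub: "\<forall>i<r. subgroup (Ai i) A"
    and Ai_card: "\<forall>i<r. card (Ai i) = p i ^ d i"
    and Ai_elem: "\<forall>i<r. \<forall>x\<in>Ai i. x [^]\<^bsub>A\<^esub> p i = \<one>\<^bsub>A\<^esub>"
    and dirprod: "bij_betw (\<lambda>x. finprod A x {..<r}) (\<Pi>\<^sub>E i\<in>{..<r}. Ai i) (carrier A)"
    and U_sub: "subgroup U (AutoGroup A)"
  shows "normal (O_U A Ai p r U) ((AutoGroup A)\<lparr>carrier := U\<rparr>)
         \<and> centralizes_series A (O_U A Ai p r U)
         \<and> (\<forall>H. normal H ((AutoGroup A)\<lparr>carrier := U\<rparr>) \<and> centralizes_series A H
                 \<longrightarrow> H \<subseteq> O_U A Ai p r U)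
         \<and> (F_relevant A U \<longleftrightarrow> O_U A Ai p r U = {\<one>\<^bsub>AutoGroup A\<^esub>})"
proof -
  interpret dec A Ai p d r
    using A_comm primes distinct d_pos Ai_sub Ai_card Ai_elem dirprod unfolding dec_def by blast
  have P1: "normal (O_U A Ai p r U) ((AutoGroup A)\<lparr>carrier := U\<rparr>)" using M1[OF U_sub] .
  have P2: "centralizes_series A (O_U A Ai p r U)"
    unfolding O_U_def
  proof (rule M2)
    fix j assume j: "j < r"
    show "subgroup (O_p (G\<lparr>carrier := sigma A Ai r U j\<rparr>) (p j)) G" using sig_facts(7)[OF U_sub j] .
    show "O_p (G\<lparr>carrier := sigma A Ai r U j\<rparr>) (p j) \<subseteq> GL_factor A Ai r j"
      using sig_facts(6)[OF U_sub j] unfolding sigma_def by blast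
    show "\<exists>n. card (O_p (G\<lparr>carrier := sigma A Ai r U j\<rparr>) (p j)) = p j ^ n" using sig_facts(5)[OF U_sub j] .
  qed
  have P3: "\<forall>H. normal H ((AutoGroup A)\<lparr>carrier := U\<rparr>) \<and> centralizes_series A H \<longrightarrow> H \<subseteq> O_U A Ai p r U"
    using M3[OF U_sub] by blast
  have P4: "F_relevant A U \<longleftrightarrow> O_U A Ai p r U = {\<one>\<^bsub>AutoGroup A\<^esub>}"
  proof
    assume "F_relevant A U"
    thus "O_U A Ai p r U = {\<one>\<^bsub>AutoGroup A\<^esub>}" unfolding F_relevant_def using P1 P2 by blast
  next
    assume O1: "O_U A Ai p r U = {\<one>\<^bsub>AutoGroup A\<^esub>}"
    show "F_relevant A U" unfolding F_relevant_def
    proof (intro allI impI)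
      fix H assume H: "normal H ((AutoGroup A)\<lparr>carrier := U\<rparr>) \<and> centralizes_series A H"
      have "H \<subseteq> {\<one>\<^bsub>AutoGroup A\<^esub>}" using P3 H O1 by blast
      moreover have "\<one>\<^bsub>AutoGroup A\<^esub> \<in> H"
        using subgroup.one_closed[OF normal_imp_subgroup[OF conjunct1[OF H]]] by simp
      ultimately show "H = {\<one>\<^bsub>AutoGroup A\<^esub>}" by blast
    qed
  qed
  show ?thesis using P1 P2 P3 P4 by blast
qed


end
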